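(* (i) Let $I,J$ be sets and $R\colon I\times J\to[0,1]$ a fuzzy relation. Then the mappings $f_R\colon[0,1]^I\to[0,1]^J$ and $g_R\colon[0,1]^J\to[0,1]^I$ satisfy $f_R\leftrightarrows g_R$ (as maps between the power Pavelka algebras $[0,1]^I$ and $[0,1]^J$). (ii) Let $\mathbf A$ and $\mathbf B$ be semisimple Pavelka algebras and let $f\colon A\to B$, $g\colon B\to A$ satisfy $f\leftrightarrows g$. Then there exists a fuzzy relation $R\colon \mathrm{Spec_M}\mathbf A\times\mathrm{Spec_M}\mathbf B\to[0,1]$ (namely $R(F,G)=\bigwedge_{a\in A}(f(a)/G\rightarrow a/F)$) such that $n_{\mathbf B}(f(x))=f_R(n_{\mathbf A}(x))$ for all $x\in A$ and $n_{\mathbf A}(g(y))=g_R(n_{\mathbf B}(y))$ for all $y\in B$, where $f_R,g_R$ are taken with $I=\mathrm{Spec_M}\mathbf A$, $J=\mathrm{Spec_M}\mathbf B$.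
   Context: An MV-algebra $(A;\oplus,\neg,0)$ carries derived operations $1=\neg0$, $x\cdot y=\neg(\neg x\oplus\neg y)$, $x\rightarrow y=\neg x\oplus y$, $x\vee y=\neg(\neg x\oplus y)\oplus y$, $x\wedge y=\neg(\neg x\vee\neg y)$, and order $x\le y$ iff $\neg x\oplus y=1$. The standard MV-algebra is $[0,1]$ with $x\oplus y=\min\{x+y,1\}$, $\neg x=1-x$ (so $x\cdot y=\max\{0,x+y-1\}$, $x\rightarrow y=\min\{1,1-x+y\}$). A Pavelka algebra is $\mathbf A=(A;\oplus,\neg,\{\mathbf r\mid r\in[0,1]\cap\mathbb Q\})$ with $(A;\oplus,\neg,\mathbf 0)$ an MV-algebra, $\mathbf r\oplus\mathbf s=\mathbf t$ whenever $\min\{r+s,1\}=t$, and $\neg\mathbf r=\mathbf s$ whenever $1-r=s$. The standard Pavelka algebra is $[0,1]$ with $\mathbf r$ interpreted as $r$; $[0,1]^I$ is its power (componentwise, constants diagonal). A filter of a Pavelka algebra is a filter of its MV-reduct (a nonempty up-set closed under $\cdot$); a maximal filter is a maximal proper filter; $\mathrm{Spec_M}\mathbf A$ is the set of maximal filters. For $F\in\mathrm{Spec_M}\mathbf A$ the quotient $\mathbf A/F$ embeds uniquely into the standard Pavelka algebra and $x/F$ is identified with its image in $[0,1]$. $\mathbf A$ is semisimple if its MV-reduct is a subdirect product of simple MV-algebras. The natural embedding is $n_{\mathbf A}\colon A\to[0,1]^{\mathrm{Spec_M}\mathbf A}$, $n_{\mathbf A}(x)(F)=x/F$. For Pavelka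 algebras $\mathbf A,\mathbf B$ and maps $f\colon A\to B$, $g\colon B\to A$: $f\leftrightarrows g$ ($f$ is a strong left adjoint of $g$) means that $f,g$ are monotone, $x\le f(y)$ iff $g(x)\le y$ for all $y\in A$, $x\in B$, and $\mathbf r\rightarrow f(x)=f(\mathbf r\rightarrow x)$ for all $x\in A$ and all constants $\mathbf r$ (equivalently $\mathbf r\cdot g(y)=g(\mathbf r\cdot y)$ for all $y\in B$ and constants $\mathbf r$). For $R\colon I\times J\to[0,1]$: $f_R(x)(j)=\bigwedge_{i\in I}(R(i,j)\rightarrow x(i))$ for $x\in[0,1]^I$, $j\in J$; $g_R(y)(i)=\bigvee_{j\in J}(R(i,j)\cdot y(j))$ for $y\in[0,1]^J$, $i\in I$ (operations of the standard MV-algebra). *)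

theory Defs
  imports Complex_Main "HOL-Library.FuncSet"
begin

record 'a pav =
  pcar :: "'a set"
  padd :: "'a \<Rightarrow> 'a \<Rightarrow> 'a"
  pneg :: "'a \<Rightarrow> 'a"
  pcst :: "rat \<Rightarrow> 'a"

definition mv_algebra :: "'a set \<Rightarrow> ('a \<Rightarrow> 'a \<Rightarrow> 'a) \<Rightarrow> ('a \<Rightarrow> 'a) \<Rightarrow> 'a \<Rightarrow> bool" where
  "mv_algebra S pl ng z \<longleftrightarrow>
     z \<in> S \<and> (\<forall>x\<in>S. \<forall>y\<in>S. pl x y \<in> S) \<and> (\<forall>x\<in>S. ng x \<in> S) \<and>
     (\<forall>x\<in>S. \<forall>y\<in>S. \<forall>w\<in>S. pl x (pl y w) = pl (pl x y) w) \<and>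
     (\<forall>x\<in>S. \<forall>y\<in>S. pl x y = pl y x) \<and>
     (\<forall>x\<in>S. pl x z = x) \<and>
     (\<forall>x\<in>S. ng (ng x) = x) \<and>
     (\<forall>x\<in>S. pl x (ng z) = ng z) \<and>
     (\<forall>x\<in>S. \<forall>y\<in>S. pl (ng (pl (ng x) y)) y = pl (ng (pl (ng y) x)) x)"

definition mv_mult :: "('a \<Rightarrow> 'a \<Rightarrow> 'a) \<Rightarrow> ('a \<Rightarrow> 'a) \<Rightarrow> 'a \<Rightarrow> 'a \<Rightarrow> 'a" where
  "mv_mult pl ng x y = ng (pl (ng x) (ng y))"

definition mv_imp :: "('a \<Rightarrow> 'a \<Rightarrow> 'a) \<Rightarrow> ('a \<Rightarrow> 'a) \<Rightarrow> 'a \<Rightarrow> 'a \<Rightarrow> 'a" where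
  "mv_imp pl ng x y = pl (ng x) y"

definition mv_le :: "('a \<Rightarrow> 'a \<Rightarrow> 'a) \<Rightarrow> ('a \<Rightarrow> 'a) \<Rightarrow> 'a \<Rightarrow> 'a \<Rightarrow> 'a \<Rightarrow> bool" where
  "mv_le pl ng z x y \<longleftrightarrow> pl (ng x) y = ng z"

definition mv_filter :: "'a set \<Rightarrow> ('a \<Rightarrow> 'a \<Rightarrow> 'a) \<Rightarrow> ('a \<Rightarrow> 'a) \<Rightarrow> 'a \<Rightarrow> 'a set \<Rightarrow> bool" where
  "mv_filter S pl ng z F \<longleftrightarrow>
     F \<subseteq> S \<and> F \<noteq> {} \<and>
     (\<forall>x\<in>F. \<forall>y\<in>S. mv_le pl ng z x y \<longrightarrow> y \<in> F) \<and>
     (\<forall>x\<in>F. \<forall>y\<in>F. mv_mult pl ng x y \<in> F)"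

definition mv_simple :: "'a set \<Rightarrow> ('a \<Rightarrow> 'a \<Rightarrow> 'a) \<Rightarrow> ('a \<Rightarrow> 'a) \<Rightarrow> 'a \<Rightarrow> bool" where
  "mv_simple S pl ng z \<longleftrightarrow> mv_algebra S pl ng z \<and> z \<noteq> ng z \<and>
     (\<forall>F. mv_filter S pl ng z F \<longrightarrow> F = {ng z} \<or> F = S)"

definition mv_hom :: "'a set \<Rightarrow> ('a \<Rightarrow> 'a \<Rightarrow> 'a) \<Rightarrow> ('a \<Rightarrow> 'a) \<Rightarrow> 'a \<Rightarrow>
    'b set \<Rightarrow> ('b \<Rightarrow> 'b \<Rightarrow> 'b) \<Rightarrow> ('b \<Rightarrow> 'b) \<Rightarrow> 'b \<Rightarrow> ('a \<Rightarrow> 'b) \<Rightarrow> bool" where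
  "mv_hom S pl ng z T pl' ng' z' h \<longleftrightarrow>
     (\<forall>x\<in>S. h x \<in> T) \<and> (\<forall>x\<in>S. \<forall>y\<in>S. h (pl x y) = pl' (h x) (h y)) \<and>
     (\<forall>x\<in>S. h (ng x) = ng' (h x)) \<and> h z = z'"

text \<open>The MV-algebra (S,pl,ng,z) is a subdirect product of the simple MV-algebras
  (T i, pl' i, ng' i, z' i), i in I, via the embedding x |-> (h i x)_i: each h i is a
  surjective homomorphism (the projections) and the family is jointly injective.\<close>
definition mv_subdirect_simple :: "'a set \<Rightarrow> ('a \<Rightarrow> 'a \<Rightarrow> 'a) \<Rightarrow> ('a \<Rightarrow> 'a) \<Rightarrow> 'a \<Rightarrow>
    'i set \<Rightarrow> ('i \<Rightarrow> 'b set) \<Rightarrow> ('i \<Rightarrow> 'b \<Rightarrow> 'b \<Rightarrow> 'b) \<Rightarrow> ('i \<Rightarrow> 'b \<Rightarrow> 'b) \<Rightarrow> ('i \<Rightarrow> 'b) \<Rightarrow>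
    ('i \<Rightarrow> 'a \<Rightarrow> 'b) \<Rightarrow> bool" where
  "mv_subdirect_simple S pl ng z I T pl' ng' z' h \<longleftrightarrow>
     (\<forall>i\<in>I. mv_simple (T i) (pl' i) (ng' i) (z' i) \<and>
             mv_hom S pl ng z (T i) (pl' i) (ng' i) (z' i) (h i) \<and> h i ` S = T i) \<and>
     (\<forall>x\<in>S. \<forall>y\<in>S. x \<noteq> y \<longrightarrow> (\<exists>i\<in>I. h i x \<noteq> h i y))"

definition semisimple :: "'i itself \<Rightarrow> 'b itself \<Rightarrow> 'a pav \<Rightarrow> bool" where
  "semisimple ti tb A \<longleftrightarrow>
     (\<exists>(I::'i set) (T::'i \<Rightarrow> 'b set) pl' ng' z' h.
        mv_subdirect_simple (pcar A) (padd A) (pneg A) (pcst A 0) I T pl' ng' z' h)"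

definition rat01 :: "rat \<Rightarrow> bool" where
  "rat01 r \<longleftrightarrow> 0 \<le> r \<and> r \<le> 1"

definition pavelka :: "'a pav \<Rightarrow> bool" where
  "pavelka A \<longleftrightarrow> mv_algebra (pcar A) (padd A) (pneg A) (pcst A 0) \<and>
     (\<forall>r. rat01 r \<longrightarrow> pcst A r \<in> pcar A) \<and>
     (\<forall>r s. rat01 r \<and> rat01 s \<longrightarrow> padd A (pcst A r) (pcst A s) = pcst A (min (r + s) 1)) \<and>
     (\<forall>r. rat01 r \<longrightarrow> pneg A (pcst A r) = pcst A (1 - r))"

definition p_le :: "'a pav \<Rightarrow> 'a \<Rightarrow> 'a \<Rightarrow> bool" where
  "p_le A = mv_le (padd A) (pneg A) (pcst A 0)"

definition p_imp :: "'a pav \<Rightarrow> 'a \<Rightarrow> 'a \<Rightarrow> 'a" where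
  "p_imp A = mv_imp (padd A) (pneg A)"

definition pfilter :: "'a pav \<Rightarrow> 'a set \<Rightarrow> bool" where
  "pfilter A F \<longleftrightarrow> mv_filter (pcar A) (padd A) (pneg A) (pcst A 0) F"

definition max_filter :: "'a pav \<Rightarrow> 'a set \<Rightarrow> bool" where
  "max_filter A F \<longleftrightarrow> pfilter A F \<and> F \<noteq> pcar A \<and>
     (\<forall>G. pfilter A G \<and> F \<subseteq> G \<and> G \<noteq> pcar A \<longrightarrow> G = F)"

definition specM :: "'a pav \<Rightarrow> 'a set set" where
  "specM A = {F. max_filter A F}"

definition std_hom :: "'a pav \<Rightarrow> ('a \<Rightarrow> real) \<Rightarrow> bool" where
  "std_hom A h \<longleftrightarrow> h \<in> extensional (pcar A) \<and>
     (\<forall>x\<in>pcar A. h x \<in> {0..1}) \<and>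
     (\<forall>x\<in>pcar A. \<forall>y\<in>pcar A. h (padd A x y) = min (h x + h y) 1) \<and>
     (\<forall>x\<in>pcar A. h (pneg A x) = 1 - h x) \<and>
     (\<forall>r. rat01 r \<longrightarrow> h (pcst A r) = real_of_rat r)"

text \<open>x/F: the image of x/F under the unique embedding of A/F into [0,1];
  equivalently, the value at x of the unique homomorphism A -> [0,1] whose 1-set is F.\<close>
definition qval :: "'a pav \<Rightarrow> 'a set \<Rightarrow> 'a \<Rightarrow> real" where
  "qval A F x = (THE h. std_hom A h \<and> {y \<in> pcar A. h y = 1} = F) x"

definition nat_emb :: "'a pav \<Rightarrow> 'a \<Rightarrow> ('a set \<Rightarrow> real)" where
  "nat_emb A x = restrict (\<lambda>F. qval A F x) (specM A)"

definition power_pav :: "'i set \<Rightarrow> ('i \<Rightarrow> real) pav" where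
  "power_pav I = \<lparr> pcar = I \<rightarrow>\<^sub>E {0..1},
     padd = (\<lambda>x y. restrict (\<lambda>i. min (x i + y i) 1) I),
     pneg = (\<lambda>x. restrict (\<lambda>i. 1 - x i) I),
     pcst = (\<lambda>r. restrict (\<lambda>i. real_of_rat r) I) \<rparr>"

definition std_imp :: "real \<Rightarrow> real \<Rightarrow> real" where
  "std_imp a b = min 1 (1 - a + b)"

definition std_mult :: "real \<Rightarrow> real \<Rightarrow> real" where
  "std_mult a b = max 0 (a + b - 1)"

definition inf01 :: "real set \<Rightarrow> real" where
  "inf01 S = (if S = {} then 1 else Inf S)"

definition sup01 :: "real set \<Rightarrow> real" where
  "sup01 S = (if S = {} then 0 else Sup S)"

definition fR :: "'i set \<Rightarrow> 'j set \<Rightarrow> ('i \<Rightarrow> 'j \<Rightarrow> real) \<Rightarrow> ('i \<Rightarrow> real) \<Rightarrow> ('j \<Rightarrow> real)" where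
  "fR I J R x = restrict (\<lambda>j. inf01 ((\<lambda>i. std_imp (R i j) (x i)) ` I)) J"

definition gR :: "'i set \<Rightarrow> 'j set \<Rightarrow> ('i \<Rightarrow> 'j \<Rightarrow> real) \<Rightarrow> ('j \<Rightarrow> real) \<Rightarrow> ('i \<Rightarrow> real)" where
  "gR I J R y = restrict (\<lambda>i. sup01 ((\<lambda>j. std_mult (R i j) (y j)) ` J)) I"

definition strong_ladj :: "'a pav \<Rightarrow> 'b pav \<Rightarrow> ('a \<Rightarrow> 'b) \<Rightarrow> ('b \<Rightarrow> 'a) \<Rightarrow> bool" where
  "strong_ladj A B f g \<longleftrightarrow>
     (\<forall>x\<in>pcar A. f x \<in> pcar B) \<and> (\<forall>y\<in>pcar B. g y \<in> pcar A) \<and>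
     (\<forall>x\<in>pcar A. \<forall>y\<in>pcar A. p_le A x y \<longrightarrow> p_le B (f x) (f y)) \<and>
     (\<forall>x\<in>pcar B. \<forall>y\<in>pcar B. p_le B x y \<longrightarrow> p_le A (g x) (g y)) \<and>
     (\<forall>y\<in>pcar A. \<forall>x\<in>pcar B. p_le B x (f y) \<longleftrightarrow> p_le A (g x) y) \<and>
     (\<forall>x\<in>pcar A. \<forall>r. rat01 r \<longrightarrow> p_imp B (pcst B r) (f x) = f (p_imp A (pcst A r) x))"

end

theory Submission
  imports Defs
begin


locale mvs =
  fixes S :: "'a set" and pl :: "'a \<Rightarrow> 'a \<Rightarrow> 'a" and ng :: "'a \<Rightarrow> 'a" and z :: 'a
  assumes mv: "mv_algebra S pl ng z"
begin

abbreviation one where "one \<equiv> ng z"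
abbreviation mul where "mul \<equiv> mv_mult pl ng"
abbreviation imp where "imp \<equiv> mv_imp pl ng"
abbreviation le where "le \<equiv> mv_le pl ng z"

lemma zS[simp]: "z \<in> S" using mv unfolding mv_algebra_def by blast
lemma plS[simp]: "x \<in> S \<Longrightarrow> y \<in> S \<Longrightarrow> pl x y \<in> S" using mv unfolding mv_algebra_def by blast
lemma ngS[simp]: "x \<in> S \<Longrightarrow> ng x \<in> S" using mv unfolding mv_algebra_def by blast
lemma assoc: "x \<in> S \<Longrightarrow> y \<in> S \<Longrightarrow> w \<in> S \<Longrightarrow> pl x (pl y w) = pl (pl x y) w" using mv unfolding mv_algebra_def by blast
lemma comm: "x \<in> S \<Longrightarrow> y \<in> S \<Longrightarrow> pl x y = pl y x" using mv unfolding mv_algebra_def by blast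
lemma zr[simp]: "x \<in> S \<Longrightarrow> pl x z = x" using mv unfolding mv_algebra_def by blast
lemma nn[simp]: "x \<in> S \<Longrightarrow> ng (ng x) = x" using mv unfolding mv_algebra_def by blast
lemma oner[simp]: "x \<in> S \<Longrightarrow> pl x (ng z) = ng z" using mv unfolding mv_algebra_def by blast
lemma mv6: "x \<in> S \<Longrightarrow> y \<in> S \<Longrightarrow> pl (ng (pl (ng x) y)) y = pl (ng (pl (ng y) x)) x" using mv unfolding mv_algebra_def by blast

lemma zl[simp]: "x \<in> S \<Longrightarrow> pl z x = x" using comm zr zS by metis
lemma onel[simp]: "x \<in> S \<Longrightarrow> pl (ng z) x = ng z" using comm oner zS ngS by metis
lemma assoc2: "x \<in> S \<Longrightarrow> y \<in> S \<Longrightarrow> w \<in> S \<Longrightarrow> pl x (pl y w) = pl y (pl x w)"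
  by (metis assoc comm)
lemmas ac = assoc comm assoc2
lemma compl[simp]: "x \<in> S \<Longrightarrow> pl x (ng x) = one"
proof -
  assume x: "x \<in> S"
  have e: "pl (ng (pl (ng x) one)) one = pl (ng (pl (ng one) x)) x" by (rule mv6[OF x ngS[OF zS]])
  have "pl (ng (pl (ng x) one)) one = one" using x by simp
  moreover have "pl (ng (pl (ng one) x)) x = pl (ng x) x" using x by simp
  ultimately have "pl (ng x) x = one" using e by simp
  thus ?thesis using x by (simp add: comm)
qed
lemma compl2[simp]: "x \<in> S \<Longrightarrow> pl (ng x) x = one" using compl comm by (metis ngS)
lemma mulS[simp]: "x \<in> S \<Longrightarrow> y \<in> S \<Longrightarrow> mul x y \<in> S" by (simp add: mv_mult_def)
lemma impS[simp]: "x \<in> S \<Longrightarrow> y \<in> S \<Longrightarrow> imp x y \<in> S" by (simp add: mv_imp_def)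
lemma oneS[simp]: "one \<in> S" by simp

lemma le_def': "le x y \<longleftrightarrow> pl (ng x) y = one" by (simp add: mv_le_def)
lemma le_refl[simp]: "x \<in> S \<Longrightarrow> le x x" by (simp add: mv_le_def)
lemma le_one[simp]: "x \<in> S \<Longrightarrow> le x one" by (simp add: mv_le_def)
lemma le_zero[simp]: "x \<in> S \<Longrightarrow> le z x" by (simp add: mv_le_def)

lemma le_decomp: "x \<in> S \<Longrightarrow> y \<in> S \<Longrightarrow> le x y \<Longrightarrow> y = pl x (ng (pl (ng y) x))"
proof -
  assume x: "x \<in> S" and y: "y \<in> S" and "le x y"
  hence "pl (ng x) y = one" by (simp add: mv_le_def)
  hence "pl (ng (pl (ng x) y)) y = y" using y by simp
  thus ?thesis using mv6[OF x y] x y by (simp add: comm)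
qed
lemma le_iff_ex: "x \<in> S \<Longrightarrow> y \<in> S \<Longrightarrow> le x y \<longleftrightarrow> (\<exists>w\<in>S. y = pl x w)"
proof
  assume "x \<in> S" "y \<in> S" "le x y" thus "\<exists>w\<in>S. y = pl x w" using le_decomp by (metis ngS plS)
next
  assume x: "x \<in> S" and "y \<in> S" "\<exists>w\<in>S. y = pl x w"
  then obtain w where w: "w \<in> S" "y = pl x w" by blast
  have "pl (ng x) (pl x w) = pl (pl (ng x) x) w" using x w by (simp add: assoc)
  hence "pl (ng x) (pl x w) = one" using x w by simp
  thus "le x y" using w by (simp add: mv_le_def)
qed
lemma le_trans: "x \<in> S \<Longrightarrow> y \<in> S \<Longrightarrow> w \<in> S \<Longrightarrow> le x y \<Longrightarrow> le y w \<Longrightarrow> le x w"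
proof -
  assume x: "x \<in> S" and y: "y \<in> S" and w: "w \<in> S" and "le x y" "le y w"
  then obtain u v where u: "u \<in> S" "y = pl x u" and v: "v \<in> S" "w = pl y v" using le_iff_ex by blast
  hence "w = pl x (pl u v)" using x by (simp add: assoc)
  thus ?thesis using le_iff_ex x w u v by auto
qed
lemma le_antisym: "x \<in> S \<Longrightarrow> y \<in> S \<Longrightarrow> le x y \<Longrightarrow> le y x \<Longrightarrow> x = y"
proof -
  assume x: "x \<in> S" and y: "y \<in> S" and "le x y" "le y x"
  hence "pl (ng x) y = one" "pl (ng y) x = one" by (simp_all add: mv_le_def)
  thus ?thesis using mv6[OF x y] x y by simp
qed
lemma pl_mono: "x \<in> S \<Longrightarrow> y \<in> S \<Longrightarrow> w \<in> S \<Longrightarrow> le x y \<Longrightarrow> le (pl x w) (pl y w)"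
proof -
  assume x: "x \<in> S" and y: "y \<in> S" and w: "w \<in> S" and "le x y"
  then obtain u where u: "u \<in> S" "y = pl x u" using le_iff_ex by blast
  hence "pl y w = pl (pl x w) u" using x w by (metis ac)
  thus ?thesis using le_iff_ex x y w u by auto
qed
lemma ng_anti: "x \<in> S \<Longrightarrow> y \<in> S \<Longrightarrow> le x y \<Longrightarrow> le (ng y) (ng x)"
  by (simp add: mv_le_def comm)
lemma le_pl: "x \<in> S \<Longrightarrow> y \<in> S \<Longrightarrow> le x (pl x y)"
  using le_iff_ex by auto
lemma mul_comm: "x \<in> S \<Longrightarrow> y \<in> S \<Longrightarrow> mul x y = mul y x" by (simp add: mv_mult_def comm)
lemma mul_assoc: "x \<in> S \<Longrightarrow> y \<in> S \<Longrightarrow> w \<in> S \<Longrightarrow> mul x (mul y w) = mul (mul x y) w"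
  by (simp add: mv_mult_def assoc)
lemma mul_one[simp]: "x \<in> S \<Longrightarrow> mul x one = x" by (simp add: mv_mult_def)
lemma mul_onel[simp]: "x \<in> S \<Longrightarrow> mul one x = x" by (simp add: mv_mult_def)
lemma mul_zero[simp]: "x \<in> S \<Longrightarrow> mul x z = z" by (simp add: mv_mult_def)
lemma mul_mono: "x \<in> S \<Longrightarrow> y \<in> S \<Longrightarrow> w \<in> S \<Longrightarrow> le x y \<Longrightarrow> le (mul x w) (mul y w)"
  unfolding mv_mult_def by (meson ng_anti pl_mono ngS plS)
lemma resid: "x \<in> S \<Longrightarrow> y \<in> S \<Longrightarrow> w \<in> S \<Longrightarrow> le (mul x y) w \<longleftrightarrow> le x (imp y w)"
  by (simp add: mv_le_def mv_mult_def mv_imp_def assoc)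
lemma mul_le: "x \<in> S \<Longrightarrow> y \<in> S \<Longrightarrow> le (mul x y) x"
proof -
  assume x: "x \<in> S" and y: "y \<in> S"
  have "le (mul y x) (mul one x)" using mul_mono[OF y oneS x] y by simp
  thus ?thesis using x y by (simp add: mul_comm)
qed
lemma mul_le2: "x \<in> S \<Longrightarrow> y \<in> S \<Longrightarrow> le (mul x y) y"
  using mul_le mul_comm by metis
lemma mp: "x \<in> S \<Longrightarrow> y \<in> S \<Longrightarrow> le (mul x (imp x y)) y"
proof -
  assume x: "x \<in> S" and y: "y \<in> S"
  have "le (mul (imp x y) x) y" using resid[of "imp x y" x y] x y by simp
  thus ?thesis using x y by (simp add: mul_comm)
qed
lemma imp_trans: "x \<in> S \<Longrightarrow> y \<in> S \<Longrightarrow> w \<in> S \<Longrightarrow> le (mul (imp x y) (imp y w)) (imp x w)"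
proof -
  assume x: "x \<in> S" and y: "y \<in> S" and w: "w \<in> S"
  have "le (mul x (mul (imp x y) (imp y w))) (mul y (imp y w))"
    using mul_mono[OF _ y, of "mul x (imp x y)" "imp y w"] mp[OF x y] x y w by (simp add: mul_assoc)
  hence "le (mul x (mul (imp x y) (imp y w))) w" using le_trans[OF _ _ w _ mp[OF y w]] x y w by simp
  hence "le (mul (mul (imp x y) (imp y w)) x) w" using x y w by (simp add: mul_comm)
  thus ?thesis using resid x y w by simp
qed
lemma pl_mul: "u \<in> S \<Longrightarrow> v \<in> S \<Longrightarrow> w \<in> S \<Longrightarrow> le (mul (pl u v) w) (pl u (mul v w))"
proof -
  assume u: "u \<in> S" and v: "v \<in> S" and w: "w \<in> S"
  have "le v (imp w (mul v w))" using resid v w by (metis mulS le_refl)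
  hence "le (pl v u) (pl (imp w (mul v w)) u)" using pl_mono u v w by simp
  moreover have "pl (imp w (mul v w)) u = imp w (pl u (mul v w))" using u v w by (simp add: mv_imp_def ac)
  ultimately show ?thesis using resid u v w by (simp add: comm)
qed
lemma pl_compat: "a \<in> S \<Longrightarrow> b \<in> S \<Longrightarrow> x \<in> S \<Longrightarrow> y \<in> S \<Longrightarrow>
   le (mul (imp a x) (imp b y)) (imp (pl a b) (pl x y))"
proof -
  assume a: "a \<in> S" and b: "b \<in> S" and x: "x \<in> S" and y: "y \<in> S"
  let ?A = "imp a x" and ?B = "imp b y"
  have 1: "le (mul (pl a b) ?A) (pl b (mul a ?A))" using pl_mul[of b a ?A] a b x by (simp add: comm)
  have 2: "le (mul (pl b (mul a ?A)) ?B) (pl (mul a ?A) (mul b ?B))" using pl_mul[of "mul a ?A" b ?B] a b x y by (simp add: comm)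
  have 3: "le (mul (mul (pl a b) ?A) ?B) (mul (pl b (mul a ?A)) ?B)" using mul_mono 1 a b x y by simp
  have 4: "le (pl (mul a ?A) (mul b ?B)) (pl x (mul b ?B))" using pl_mono[OF _ _ _ mp[OF a x]] a b x y by simp
  have "le (pl (mul b ?B) x) (pl y x)" using pl_mono[OF _ _ x mp[OF b y]] b x y by simp
  hence 5: "le (pl x (mul b ?B)) (pl x y)" using b x y by (simp add: comm)
  have 45: "le (pl (mul a ?A) (mul b ?B)) (pl x y)" using le_trans[OF _ _ _ 4 5] a b x y by simp
  have 6: "le (mul (pl b (mul a ?A)) ?B) (pl x y)" using le_trans[OF _ _ _ 2 45] a b x y by simp
  have "le (mul (mul (pl a b) ?A) ?B) (pl x y)" using le_trans[OF _ _ _ 3 6] a b x y by simp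
  moreover have "mul (mul (pl a b) ?A) ?B = mul (mul ?A ?B) (pl a b)"
  proof -
    have "mul (mul (pl a b) ?A) ?B = mul (pl a b) (mul ?A ?B)" using a b x y by (simp add: mul_assoc)
    also have "\<dots> = mul (mul ?A ?B) (pl a b)" using a b x y by (intro mul_comm) simp_all
    finally show ?thesis .
  qed
  ultimately have "le (mul (mul ?A ?B) (pl a b)) (pl x y)" by simp
  thus ?thesis using resid a b x y by simp
qed


lemma mul_mono2: "x \<in> S \<Longrightarrow> y \<in> S \<Longrightarrow> x' \<in> S \<Longrightarrow> y' \<in> S \<Longrightarrow> le x y \<Longrightarrow> le x' y' \<Longrightarrow> le (mul x x') (mul y y')"
proof -
  assume a: "x \<in> S" "y \<in> S" "x' \<in> S" "y' \<in> S" "le x y" "le x' y'"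
  have 1: "le (mul x x') (mul y x')" using mul_mono a by simp
  have "le (mul x' y) (mul y' y)" using mul_mono a by simp
  hence 2: "le (mul y x') (mul y y')" using a by (simp add: mul_comm)
  show ?thesis using le_trans[OF _ _ _ 1 2] a by simp
qed
lemma mul_compl[simp]: "x \<in> S \<Longrightarrow> mul x (ng x) = z" by (simp add: mv_mult_def)
lemma ng_pl: "x \<in> S \<Longrightarrow> y \<in> S \<Longrightarrow> ng (pl x y) = mul (ng x) (ng y)" by (simp add: mv_mult_def)
lemma imp_z[simp]: "x \<in> S \<Longrightarrow> imp x z = ng x" by (simp add: mv_imp_def)
lemma meet_comm: "x \<in> S \<Longrightarrow> y \<in> S \<Longrightarrow> mul x (pl (ng x) y) = mul y (pl (ng y) x)"
proof -
  assume x: "x \<in> S" and y: "y \<in> S"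
  have "pl (ng (pl (ng (ng x)) (ng y))) (ng y) = pl (ng (pl (ng (ng y)) (ng x))) (ng x)"
    by (rule mv6) (simp_all add: x y)
  hence "ng (pl (ng (pl x (ng y))) (ng y)) = ng (pl (ng (pl y (ng x))) (ng x))" using x y by simp
  hence "mul (pl x (ng y)) y = mul (pl y (ng x)) x" using x y by (simp add: mv_mult_def)
  thus ?thesis using x y by (simp add: mul_comm comm)
qed
lemma key_orth: "a \<in> S \<Longrightarrow> b \<in> S \<Longrightarrow> pl (mul a b) (pl a b) = pl a b"
proof -
  assume a: "a \<in> S" and b: "b \<in> S"
  define s where "s = pl a b"
  define w where "w = mul a b"
  have sS: "s \<in> S" and wS: "w \<in> S" using a b by (simp_all add: s_def w_def)
  have "b = pl w (ng (pl (ng b) w))" using le_decomp[OF wS b] mul_le2 a b by (simp add: w_def)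
  moreover have "ng (pl (ng b) w) = mul b (pl (ng b) (ng a))" using a b by (simp add: w_def mv_mult_def comm)
  moreover have "mul b (pl (ng b) (ng a)) = mul (ng a) s" using meet_comm[of b "ng a"] a b by (simp add: s_def)
  ultimately have bw: "b = pl w (mul (ng a) s)" by simp
  have "s = pl a (ng (pl (ng s) a))" using le_decomp[OF a sS] le_pl a b by (simp add: s_def)
  moreover have "ng (pl (ng s) a) = mul (ng a) s" using a sS by (simp add: mv_mult_def comm)
  ultimately have sa: "s = pl a (mul (ng a) s)" by simp
  have "s = pl a (pl w (mul (ng a) s))" using bw by (simp add: s_def)
  also have "\<dots> = pl w (pl a (mul (ng a) s))" using a wS sS by (simp add: assoc2)
  also have "\<dots> = pl w s" using sa by simp
  finally show ?thesis by (simp add: s_def w_def)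
qed

definition Jv where "Jv u v = pl (ng (pl (ng u) v)) v"
lemma J_comm: "u \<in> S \<Longrightarrow> v \<in> S \<Longrightarrow> Jv u v = Jv v u" by (simp add: Jv_def mv6)
lemma J_one: "u \<in> S \<Longrightarrow> v \<in> S \<Longrightarrow> Jv u v = one \<longleftrightarrow> le (ng v) (mul u (ng v))"
  by (simp add: Jv_def mv_le_def mv_mult_def comm)
lemma prelin: "x \<in> S \<Longrightarrow> y \<in> S \<Longrightarrow> Jv (imp x y) (imp y x) = one"
proof -
  assume x: "x \<in> S" and y: "y \<in> S"
  have "pl (ng (imp x y)) (imp y x) = pl (mul x (ng y)) (pl x (ng y))"
    using x y by (simp add: mv_imp_def mv_mult_def comm)
  also have "\<dots> = pl x (ng y)" using key_orth x y by simp
  also have "\<dots> = imp y x" using x y by (simp add: mv_imp_def comm)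
  finally show ?thesis using x y by (simp add: Jv_def)
qed

definition pw where "pw x n = ((mul x) ^^ n) one"
lemma pw0[simp]: "pw x 0 = one" by (simp add: pw_def)
lemma pwSuc: "pw x (Suc n) = mul x (pw x n)" by (simp add: pw_def)
lemma pwS[simp]: "x \<in> S \<Longrightarrow> pw x n \<in> S" by (induct n) (simp_all add: pwSuc)
lemma pw_add: "x \<in> S \<Longrightarrow> pw x (n + m) = mul (pw x n) (pw x m)"
  by (induct n) (simp_all add: pwSuc mul_assoc)
lemma pw1[simp]: "x \<in> S \<Longrightarrow> pw x 1 = x" by (simp add: pwSuc)

lemma J_pw: "u \<in> S \<Longrightarrow> v \<in> S \<Longrightarrow> Jv u v = one \<Longrightarrow> Jv (pw u n) v = one"
proof -
  assume u: "u \<in> S" and v: "v \<in> S" and j: "Jv u v = one"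
  have b: "le (ng v) (mul u (ng v))" using J_one u v j by simp
  have "le (ng v) (mul (pw u n) (ng v))"
  proof (induct n)
    case 0 thus ?case using v by simp
  next
    case (Suc n)
    have "le (mul u (ng v)) (mul u (mul (pw u n) (ng v)))"
      using mul_mono[OF _ _ u Suc] u v by (simp add: mul_comm)
    hence "le (ng v) (mul u (mul (pw u n) (ng v)))" using le_trans[OF _ _ _ b] u v by simp
    thus ?case using u v by (simp add: pwSuc mul_assoc)
  qed
  thus ?thesis using J_one u v by simp
qed
lemma prelin_pw: "x \<in> S \<Longrightarrow> y \<in> S \<Longrightarrow> le (ng (pw (imp x y) n)) (pw (imp y x) m)"
proof -
  assume x: "x \<in> S" and y: "y \<in> S"
  let ?p = "imp x y" and ?q = "imp y x"
  have "Jv (pw ?p n) ?q = one" using J_pw prelin x y by simp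
  hence "Jv ?q (pw ?p n) = one" using J_comm x y by simp
  hence "Jv (pw ?q m) (pw ?p n) = one" using J_pw x y by simp
  hence "le (ng (pw ?p n)) (mul (pw ?q m) (ng (pw ?p n)))" using J_one x y by simp
  thus ?thesis using le_trans[OF _ _ _ _ mul_le] x y by simp
qed

definition filt where "filt F \<longleftrightarrow> mv_filter S pl ng z F"
lemma filt_sub: "filt F \<Longrightarrow> F \<subseteq> S" by (simp add: filt_def mv_filter_def)
lemma filt_up: "filt F \<Longrightarrow> x \<in> F \<Longrightarrow> y \<in> S \<Longrightarrow> le x y \<Longrightarrow> y \<in> F" by (simp add: filt_def mv_filter_def)
lemma filt_mul: "filt F \<Longrightarrow> x \<in> F \<Longrightarrow> y \<in> F \<Longrightarrow> mul x y \<in> F" by (simp add: filt_def mv_filter_def)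
lemma filt_one: "filt F \<Longrightarrow> one \<in> F"
proof -
  assume f: "filt F"
  then obtain x where "x \<in> F" by (auto simp: filt_def mv_filter_def)
  thus ?thesis using filt_up[OF f] filt_sub[OF f] by auto
qed
lemma filt_z: "filt F \<Longrightarrow> z \<in> F \<Longrightarrow> F = S"
  using filt_up filt_sub le_zero by blast
lemma filt_imp: "filt F \<Longrightarrow> x \<in> F \<Longrightarrow> imp x y \<in> F \<Longrightarrow> y \<in> S \<Longrightarrow> y \<in> F"
proof -
  assume f: "filt F" and "x \<in> F" "imp x y \<in> F" "y \<in> S"
  moreover hence "x \<in> S" using filt_sub f by auto
  ultimately show ?thesis using filt_up[OF f filt_mul[OF f], of x "imp x y" y] mp by simp
qed
lemma filt_pw: "filt F \<Longrightarrow> x \<in> F \<Longrightarrow> pw x n \<in> F"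
  by (induct n) (simp_all add: filt_one pwSuc filt_mul)

definition maxf where "maxf F \<longleftrightarrow> filt F \<and> F \<noteq> S \<and> (\<forall>G. filt G \<and> F \<subseteq> G \<and> G \<noteq> S \<longrightarrow> G = F)"

lemma maxf_M1: "maxf F \<Longrightarrow> x \<in> S \<Longrightarrow> x \<notin> F \<Longrightarrow> \<exists>n. ng (pw x n) \<in> F"
proof -
  assume m: "maxf F" and x: "x \<in> S" and xF: "x \<notin> F"
  have f: "filt F" and FS: "F \<subseteq> S" using m filt_sub by (auto simp: maxf_def)
  define G where "G = {y \<in> S. \<exists>f\<in>F. \<exists>n. le (mul f (pw x n)) y}"
  have "filt G" unfolding filt_def mv_filter_def
  proof (intro conjI ballI impI)
    show "G \<subseteq> S" by (auto simp: G_def)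
    have "one \<in> G" using filt_one[OF f] by (auto simp: G_def intro!: bexI[of _ one] exI[of _ 0])
    thus "G \<noteq> {}" by auto
  next
    fix a b assume a: "a \<in> G" and b: "b \<in> S" and ab: "le a b"
    then obtain g n where "g \<in> F" "le (mul g (pw x n)) a" "a \<in> S" by (auto simp: G_def)
    moreover hence "le (mul g (pw x n)) b" using le_trans[OF _ _ b _ ab] FS x by auto
    ultimately show "b \<in> G" using b by (auto simp: G_def)
  next
    fix a b assume a: "a \<in> G" and b: "b \<in> G"
    then obtain g n h k where g: "g \<in> F" "le (mul g (pw x n)) a" "a \<in> S"
      and h: "h \<in> F" "le (mul h (pw x k)) b" "b \<in> S" by (auto simp: G_def)
    have gS: "g \<in> S" and hS: "h \<in> S" using g h FS by auto
    have "le (mul (mul g (pw x n)) (mul h (pw x k))) (mul a b)"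
      using mul_mono2[OF _ _ _ _ g(2) h(2)] g h gS hS x by simp
    moreover have "mul (mul g (pw x n)) (mul h (pw x k)) = mul (mul g h) (pw x (n + k))"
    proof -
      have "mul (mul g (pw x n)) (mul h (pw x k)) = mul g (mul (pw x n) (mul h (pw x k)))"
        using gS hS x by (simp add: mul_assoc)
      also have "mul (pw x n) (mul h (pw x k)) = mul h (mul (pw x n) (pw x k))"
        using hS x by (metis mul_assoc mul_comm pwS)
      finally show ?thesis using gS hS x by (simp add: mul_assoc pw_add)
    qed
    ultimately show "mul a b \<in> G" using filt_mul[OF f g(1) h(1)] g h by (auto simp: G_def)
  qed
  moreover have "F \<subseteq> G"
  proof
    fix y assume "y \<in> F" thus "y \<in> G" using FS by (auto simp: G_def intro!: bexI[of _ y] exI[of _ 0])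
  qed
  moreover have "x \<in> G" using filt_one[OF f] x by (auto simp: G_def intro!: bexI[of _ one] exI[of _ 1] simp: pwSuc)
  ultimately have "G = S" using m xF by (auto simp: maxf_def)
  hence "z \<in> G" by simp
  then obtain g n where g: "g \<in> F" "le (mul g (pw x n)) z" by (auto simp: G_def)
  hence "le g (imp (pw x n) z)" using resid FS x by auto
  hence "ng (pw x n) \<in> F" using filt_up[OF f g(1)] x by auto
  thus ?thesis by blast
qed

lemma maxf_prime: "maxf F \<Longrightarrow> x \<in> S \<Longrightarrow> y \<in> S \<Longrightarrow> imp x y \<in> F \<or> imp y x \<in> F"
proof (rule ccontr)
  assume m: "maxf F" and x: "x \<in> S" and y: "y \<in> S" and c: "\<not> (imp x y \<in> F \<or> imp y x \<in> F)"
  have f: "filt F" using m by (simp add: maxf_def)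
  obtain n where n: "ng (pw (imp x y) n) \<in> F" using maxf_M1[OF m impS[OF x y]] c by auto
  obtain k where k: "ng (pw (imp y x) k) \<in> F" using maxf_M1[OF m impS[OF y x]] c by auto
  have "le (mul (ng (pw (imp x y) n)) (ng (pw (imp y x) k))) (mul (pw (imp y x) k) (ng (pw (imp y x) k)))"
    by (rule mul_mono[OF _ _ _ prelin_pw[OF x y, of n k]]) (simp_all add: x y)
  hence "le (mul (ng (pw (imp x y) n)) (ng (pw (imp y x) k))) z" using x y by simp
  hence "z \<in> F" using filt_up[OF f filt_mul[OF f n k]] by simp
  thus False using filt_z f m by (simp add: maxf_def)
qed

end




context mvs begin

lemma kernel_max:
  assumes sim: "mv_simple T pl' ng' z'" and hom: "mv_hom S pl ng z T pl' ng' z' h" and sur: "h ` S = T"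
  shows "maxf {x \<in> S. h x = ng' z'}"
proof -
  interpret T: mvs T pl' ng' z' using sim by (unfold_locales) (simp add: mv_simple_def)
  have hT: "\<And>x. x \<in> S \<Longrightarrow> h x \<in> T" and hpl: "\<And>x y. x \<in> S \<Longrightarrow> y \<in> S \<Longrightarrow> h (pl x y) = pl' (h x) (h y)"
    and hng: "\<And>x. x \<in> S \<Longrightarrow> h (ng x) = ng' (h x)" and hz: "h z = z'"
    using hom by (auto simp: mv_hom_def)
  have zne: "z' \<noteq> ng' z'" using sim by (simp add: mv_simple_def)
  have hone: "h one = ng' z'" using hng hz by simp
  have hmul: "\<And>x y. x \<in> S \<Longrightarrow> y \<in> S \<Longrightarrow> h (mul x y) = T.mul (h x) (h y)"
    by (simp add: mv_mult_def hpl hng)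
  have himp: "\<And>x y. x \<in> S \<Longrightarrow> y \<in> S \<Longrightarrow> h (imp x y) = T.imp (h x) (h y)"
    by (simp add: mv_imp_def hpl hng)
  define K where "K = {x \<in> S. h x = ng' z'}"
  have KS: "K \<subseteq> S" by (auto simp: K_def)
  have fK: "filt K" unfolding filt_def mv_filter_def
  proof (intro conjI ballI impI)
    show "K \<subseteq> S" by (rule KS)
    show "K \<noteq> {}" using hone by (auto simp: K_def intro!: exI[of _ one])
  next
    fix x y assume x: "x \<in> K" and y: "y \<in> S" and "le x y"
    hence "pl (ng x) y = one" by (simp add: mv_le_def)
    hence "h (pl (ng x) y) = ng' z'" using hone by simp
    hence "pl' (ng' (ng' z')) (h y) = ng' z'" using x y hpl hng by (simp add: K_def)
    hence "h y = ng' z'" using hT[OF y] by simp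
    thus "y \<in> K" using y by (simp add: K_def)
  next
    fix x y assume x: "x \<in> K" and y: "y \<in> K"
    thus "mul x y \<in> K" using hmul by (simp add: K_def mv_mult_def)
  qed
  have "z \<notin> K" using hz zne by (simp add: K_def)
  hence KneS: "K \<noteq> S" using zS by blast
  have "\<forall>G. filt G \<and> K \<subseteq> G \<and> G \<noteq> S \<longrightarrow> G = K"
  proof (intro allI impI)
    fix G assume a: "filt G \<and> K \<subseteq> G \<and> G \<noteq> S"
    hence fG: "filt G" and KG: "K \<subseteq> G" and GS: "G \<noteq> S" by auto
    have GS': "G \<subseteq> S" using filt_sub fG by simp
    have "mv_filter T pl' ng' z' (h ` G)" unfolding mv_filter_def
    proof (intro conjI ballI impI)
      show "h ` G \<subseteq> T" using hT GS' by auto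
      show "h ` G \<noteq> {}" using filt_one[OF fG] by auto
    next
      fix u t assume u: "u \<in> h ` G" and t: "t \<in> T" and ut: "T.le u t"
      obtain g where g: "g \<in> G" "u = h g" using u by auto
      obtain a where a: "a \<in> S" "t = h a" using t sur by auto
      have gS: "g \<in> S" using g GS' by auto
      have "h (imp g a) = ng' z'" using ut g a gS himp by (simp add: mv_le_def mv_imp_def)
      hence "imp g a \<in> G" using KG gS a by (auto simp: K_def)
      hence "a \<in> G" using filt_imp[OF fG g(1)] a by simp
      thus "t \<in> h ` G" using a by simp
    next
      fix u v assume "u \<in> h ` G" "v \<in> h ` G"
      then obtain g1 g2 where g: "g1 \<in> G" "g2 \<in> G" "u = h g1" "v = h g2" by auto
      moreover hence "g1 \<in> S" "g2 \<in> S" using GS' by auto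
      ultimately have "T.mul u v = h (mul g1 g2)" using hmul by simp
      moreover have "mul g1 g2 \<in> G" using filt_mul[OF fG g(1,2)] .
      ultimately show "T.mul u v \<in> h ` G" by simp
    qed
    hence "h ` G = {ng' z'} \<or> h ` G = T" using sim by (simp add: mv_simple_def)
    thus "G = K"
    proof
      assume "h ` G = {ng' z'}"
      hence "G \<subseteq> K" using GS' by (auto simp: K_def)
      thus ?thesis using KG by auto
    next
      assume "h ` G = T"
      hence "z' \<in> h ` G" using T.zS by simp
      then obtain g where g: "g \<in> G" "h g = z'" by auto
      have gS: "g \<in> S" using g GS' by auto
      have "h (ng g) = ng' z'" using hng gS g by simp
      hence "ng g \<in> G" using KG gS by (auto simp: K_def)
      hence "mul g (ng g) \<in> G" using filt_mul[OF fG g(1)] by simp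
      hence "z \<in> G" using gS by simp
      thus ?thesis using filt_z[OF fG] GS by simp
    qed
  qed
  thus ?thesis using fK KneS by (simp add: maxf_def K_def)
qed

lemma extend_max: "filt G \<Longrightarrow> G \<noteq> S \<Longrightarrow> \<exists>F. maxf F \<and> G \<subseteq> F"
proof -
  assume fG: "filt G" and GS: "G \<noteq> S"
  define AA where "AA = {H. filt H \<and> H \<noteq> S \<and> G \<subseteq> H}"
  have "\<forall>C\<in>chains AA. \<exists>U\<in>AA. \<forall>X\<in>C. X \<subseteq> U"
  proof
    fix C assume C: "C \<in> chains AA"
    hence CA: "C \<subseteq> AA" and ch: "\<forall>X\<in>C. \<forall>Y\<in>C. X \<subseteq> Y \<or> Y \<subseteq> X" by (auto simp: chains_def chain_subset_def)
    show "\<exists>U\<in>AA. \<forall>X\<in>C. X \<subseteq> U"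
    proof (cases "C = {}")
      case True thus ?thesis using fG GS by (auto simp: AA_def)
    next
      case False
      then obtain X0 where X0: "X0 \<in> C" by auto
      have mem: "\<And>X. X \<in> C \<Longrightarrow> filt X \<and> X \<noteq> S \<and> G \<subseteq> X" using CA by (auto simp: AA_def)
      have zU: "z \<notin> \<Union>C" using mem filt_z by blast
      have "filt (\<Union>C)" unfolding filt_def mv_filter_def
      proof (intro conjI ballI impI)
        show "\<Union>C \<subseteq> S" using mem filt_sub by blast
        show "\<Union>C \<noteq> {}" using X0 mem filt_one by blast
      next
        fix x y assume "x \<in> \<Union>C" "y \<in> S" "le x y"
        thus "y \<in> \<Union>C" using mem filt_up by blast
      next
        fix x y assume "x \<in> \<Union>C" "y \<in> \<Union>C"
        then obtain X Y where XY: "X \<in> C" "Y \<in> C" "x \<in> X" "y \<in> Y" by auto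
        show "mul x y \<in> \<Union>C"
        proof (cases "X \<subseteq> Y")
          case True thus ?thesis using XY mem[of Y] filt_mul by blast
        next
          case False hence "Y \<subseteq> X" using ch XY by blast
          thus ?thesis using XY mem[of X] filt_mul by blast
        qed
      qed
      moreover have "\<Union>C \<noteq> S" using zU by auto
      moreover have "G \<subseteq> \<Union>C" using X0 mem by blast
      ultimately show ?thesis by (auto simp: AA_def)
    qed
  qed
  then obtain M where M: "M \<in> AA" "\<forall>X\<in>AA. M \<subseteq> X \<longrightarrow> X = M" using Zorn_Lemma2 by blast
  have "maxf M" unfolding maxf_def
  proof (intro conjI allI impI)
    show "filt M" "M \<noteq> S" using M by (auto simp: AA_def)
    fix H assume "filt H \<and> M \<subseteq> H \<and> H \<noteq> S"
    thus "H = M" using M by (auto simp: AA_def)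
  qed
  thus ?thesis using M by (auto simp: AA_def)
qed

definition prodl where "prodl es = foldr mul es one"
lemma prodlS: "set es \<subseteq> S \<Longrightarrow> prodl es \<in> S" by (induct es) (auto simp: prodl_def)
lemma prodl_app: "set es \<subseteq> S \<Longrightarrow> set fs \<subseteq> S \<Longrightarrow> prodl (es @ fs) = mul (prodl es) (prodl fs)"
  by (induct es) (auto simp: prodl_def mul_assoc prodlS[unfolded prodl_def])
lemma prodl_F: "filt F \<Longrightarrow> set es \<subseteq> F \<Longrightarrow> prodl es \<in> F"
  by (induct es) (auto simp: prodl_def filt_one filt_mul)

lemma compact:
  assumes ES: "E \<subseteq> S" and cov: "\<forall>F. maxf F \<longrightarrow> (\<exists>e\<in>E. e \<notin> F)"
  shows "\<exists>es. set es \<subseteq> E \<and> (\<forall>F. maxf F \<longrightarrow> (\<exists>e\<in>set es. e \<notin> F))"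
proof -
  define G where "G = {y \<in> S. \<exists>es. set es \<subseteq> E \<and> le (prodl es) y}"
  have fG: "filt G" unfolding filt_def mv_filter_def
  proof (intro conjI ballI impI)
    show "G \<subseteq> S" by (auto simp: G_def)
    have "one \<in> G" by (auto simp: G_def prodl_def intro!: exI[of _ "[]"])
    thus "G \<noteq> {}" by auto
  next
    fix x y assume "x \<in> G" "y \<in> S" "le x y"
    then obtain es where es: "set es \<subseteq> E" "le (prodl es) x" "x \<in> S" "y \<in> S" "le x y" by (auto simp: G_def)
    have "prodl es \<in> S" using prodlS es(1) ES by auto
    hence "le (prodl es) y" using le_trans es by blast
    thus "y \<in> G" using es by (auto simp: G_def)
  next
    fix x y assume "x \<in> G" "y \<in> G"
    then obtain es fs where es: "set es \<subseteq> E" "le (prodl es) x" "x \<in> S" and fs: "set fs \<subseteq> E" "le (prodl fs) y" "y \<in> S"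
      by (auto simp: G_def)
    have eS: "set es \<subseteq> S" "set fs \<subseteq> S" using es(1) fs(1) ES by auto
    have "le (prodl (es @ fs)) (mul x y)"
      using mul_mono2[OF _ _ _ _ es(2) fs(2)] es fs prodlS[OF eS(1)] prodlS[OF eS(2)] prodl_app[OF eS] by simp
    thus "mul x y \<in> G" using es fs by (auto simp: G_def intro!: exI[of _ "es @ fs"])
  qed
  show ?thesis
  proof (cases "z \<in> G")
    case True
    then obtain es where es: "set es \<subseteq> E" "le (prodl es) z" by (auto simp: G_def)
    have "\<forall>F. maxf F \<longrightarrow> (\<exists>e\<in>set es. e \<notin> F)"
    proof (intro allI impI)
      fix F assume m: "maxf F"
      have f: "filt F" and FS: "F \<noteq> S" using m by (simp_all add: maxf_def)
      show "\<exists>e\<in>set es. e \<notin> F"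
      proof (rule ccontr)
        assume "\<not> (\<exists>e\<in>set es. e \<notin> F)"
        hence "set es \<subseteq> F" by blast
        hence "prodl es \<in> F" using prodl_F[OF f] by simp
        hence "z \<in> F" using filt_up[OF f _ zS es(2)] by simp
        thus False using filt_z f FS by simp
      qed
    qed
    thus ?thesis using es(1) by (intro exI[of _ es]) simp
  next
    case False
    hence "G \<noteq> S" using zS by blast
    then obtain F where F: "maxf F" "G \<subseteq> F" using extend_max fG by blast
    have "E \<subseteq> G"
    proof
      fix e assume e: "e \<in> E"
      hence "prodl [e] = e" using ES by (auto simp: prodl_def)
      thus "e \<in> G" using e ES by (auto simp: G_def intro!: exI[of _ "[e]"])
    qed
    moreover obtain e where "e \<in> E" "e \<notin> F" using cov F(1) by blast
    ultimately have False using F(2) by blast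
    thus ?thesis ..
  qed
qed
end

locale pav = fixes A :: "'a pav" assumes pav: "pavelka A"
begin
sublocale mvs "pcar A" "padd A" "pneg A" "pcst A 0"
  using pav by (unfold_locales) (simp add: pavelka_def)

abbreviation c where "c \<equiv> pcst A"
abbreviation S where "S \<equiv> pcar A"
abbreviation pl where "pl \<equiv> padd A"
abbreviation ng where "ng \<equiv> pneg A"
abbreviation z where "z \<equiv> pcst A 0"

lemma cS[simp]: "rat01 r \<Longrightarrow> c r \<in> pcar A" using pav by (simp add: pavelka_def)
lemma c_pl: "rat01 r \<Longrightarrow> rat01 s \<Longrightarrow> padd A (c r) (c s) = c (min (r + s) 1)" using pav by (simp add: pavelka_def)
lemma c_ng: "rat01 r \<Longrightarrow> pneg A (c r) = c (1 - r)" using pav by (simp add: pavelka_def)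
lemma r01[simp]: "rat01 0" "rat01 1" by (simp_all add: rat01_def)
lemma one_c: "one = c 1" using c_ng[of 0] by simp
lemma c_mul: "rat01 r \<Longrightarrow> rat01 s \<Longrightarrow> mul (c r) (c s) = c (max 0 (r + s - 1))"
proof -
  assume r: "rat01 r" and s: "rat01 s"
  have "mul (c r) (c s) = pneg A (c (min (1 - r + (1 - s)) 1))"
    using r s by (simp add: mv_mult_def c_ng c_pl rat01_def)
  also have "\<dots> = c (1 - min (1 - r + (1 - s)) 1)" using r s by (intro c_ng) (auto simp: rat01_def)
  also have "1 - min (1 - r + (1 - s)) 1 = max 0 (r + s - 1)" by (simp add: min_def max_def)
  finally show ?thesis .
qed
lemma c_imp: "rat01 r \<Longrightarrow> rat01 s \<Longrightarrow> imp (c r) (c s) = c (min 1 (1 - r + s))"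
proof -
  assume r: "rat01 r" and s: "rat01 s"
  have "imp (c r) (c s) = c (min (1 - r + s) 1)"
    using r s by (simp add: mv_imp_def c_ng c_pl rat01_def)
  thus ?thesis by (simp add: min.commute)
qed
lemma c_imp_one: "rat01 r \<Longrightarrow> rat01 s \<Longrightarrow> r \<le> s \<Longrightarrow> imp (c r) (c s) = one"
  by (simp add: c_imp one_c)
lemma c_pw: "rat01 r \<Longrightarrow> pw (c r) n = c (max 0 (of_nat n * r - (of_nat n - 1)))"
proof (induct n)
  case 0 thus ?case by (simp add: one_c)
next
  case (Suc n)
  have r: "rat01 (max 0 (of_nat n * r - (of_nat n - 1)))"
  proof -
    have "of_nat n * r \<le> of_nat n" using Suc.prems by (simp add: rat01_def mult_left_le)
    thus ?thesis using Suc.prems by (auto simp: rat01_def)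
  qed
  have "pw (c r) (Suc n) = mul (c r) (c (max 0 (of_nat n * r - (of_nat n - 1))))" using Suc by (simp add: pwSuc)
  also have "\<dots> = c (max 0 (r + max 0 (of_nat n * r - (of_nat n - 1)) - 1))" using c_mul Suc.prems r by simp
  also have "max 0 (r + max 0 (of_nat n * r - (of_nat n - 1)) - 1) = max 0 (of_nat (Suc n) * r - (of_nat (Suc n) - 1))"
    using Suc.prems by (auto simp: rat01_def max_def algebra_simps)
  finally show ?case .
qed

lemma no_const: "filt F \<Longrightarrow> F \<noteq> pcar A \<Longrightarrow> rat01 r \<Longrightarrow> r < 1 \<Longrightarrow> c r \<notin> F"
proof
  assume f: "filt F" and FS: "F \<noteq> pcar A" and r: "rat01 r" "r < 1" and cF: "c r \<in> F"
  obtain n :: nat where n: "1 / (1 - r) < of_nat n" using reals_Archimedean2 by blast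
  hence "1 < of_nat n * (1 - r)" using r by (simp add: field_simps)
  hence "max 0 (of_nat n * r - (of_nat n - 1)) = 0" by (simp add: algebra_simps)
  hence "pw (c r) n = z" using c_pw r by simp
  hence "z \<in> F" using filt_pw[OF f cF, of n] by simp
  thus False using filt_z f FS by simp
qed


lemma rat01_min: "rat01 r \<Longrightarrow> rat01 s \<Longrightarrow> rat01 (min (r + s) 1)" by (auto simp: rat01_def)
lemma rat01_1m: "rat01 r \<Longrightarrow> rat01 (1 - r)" by (auto simp: rat01_def)

lemma of_rat_min: "(of_rat (min a b) :: real) = min (of_rat a) (of_rat b)"
  by (simp add: min_def of_rat_less_eq)
definition Lo where "Lo F x = {r. rat01 r \<and> imp (c r) x \<in> F}"
definition Up where "Up F x = {r. rat01 r \<and> imp x (c r) \<in> F}"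
definition hv where "hv F x = Sup (of_rat ` Lo F x :: real set)"

context fixes F assumes m: "maxf F"
begin
lemma f: "filt F" using m by (simp add: maxf_def)
lemma FS: "F \<subseteq> S" using filt_sub f by simp
lemma Fne: "F \<noteq> S" using m by (simp add: maxf_def)
lemma oneF: "one \<in> F" using filt_one f by simp

lemma L0: "x \<in> S \<Longrightarrow> 0 \<in> Lo F x" using oneF by (simp add: Lo_def mv_imp_def)
lemma U1: "x \<in> S \<Longrightarrow> 1 \<in> Up F x" using oneF by (simp add: Up_def mv_imp_def one_c[symmetric])
lemma sep: "x \<in> S \<Longrightarrow> r \<in> Lo F x \<Longrightarrow> s \<in> Up F x \<Longrightarrow> r \<le> s"
proof (rule ccontr)
  assume x: "x \<in> S" and r: "r \<in> Lo F x" and s: "s \<in> Up F x" and c: "\<not> r \<le> s"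
  have rs: "rat01 r" "rat01 s" using r s by (auto simp: Lo_def Up_def)
  have "mul (imp (c r) x) (imp x (c s)) \<in> F" using r s filt_mul f by (auto simp: Lo_def Up_def)
  hence "imp (c r) (c s) \<in> F" using filt_up[OF f _ _ imp_trans] x rs by simp
  hence "c (min 1 (1 - r + s)) \<in> F" using c_imp rs by simp
  moreover have "rat01 (min 1 (1 - r + s))" "min 1 (1 - r + s) < 1" using rs c by (auto simp: rat01_def)
  ultimately show False using no_const[OF f Fne] by blast
qed
lemma cover: "x \<in> S \<Longrightarrow> rat01 r \<Longrightarrow> r \<in> Lo F x \<or> r \<in> Up F x"
  using maxf_prime[OF m, of "c r" x] by (auto simp: Lo_def Up_def)

lemma Lo_bdd: "x \<in> S \<Longrightarrow> bdd_above (of_rat ` Lo F x :: real set)"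
  by (rule bdd_aboveI[of _ 1]) (auto simp: Lo_def rat01_def)
lemma Lo_ne: "x \<in> S \<Longrightarrow> (of_rat ` Lo F x :: real set) \<noteq> {}" using L0 by auto
lemma hA: "x \<in> S \<Longrightarrow> r \<in> Lo F x \<Longrightarrow> of_rat r \<le> hv F x"
  unfolding hv_def by (rule cSup_upper) (auto simp: Lo_bdd)
lemma hB: "x \<in> S \<Longrightarrow> s \<in> Up F x \<Longrightarrow> hv F x \<le> of_rat s"
proof -
  assume x: "x \<in> S" and s: "s \<in> Up F x"
  show ?thesis unfolding hv_def
    by (rule cSup_least) (use L0[OF x] sep[OF x _ s] in \<open>auto simp: of_rat_less_eq\<close>)
qed
lemma h01: "x \<in> S \<Longrightarrow> 0 \<le> hv F x \<and> hv F x \<le> 1"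
  using hA[OF _ L0, of x] hB[OF _ U1, of x] by simp
lemma hC: "x \<in> S \<Longrightarrow> rat01 r \<Longrightarrow> of_rat r < hv F x \<Longrightarrow> r \<in> Lo F x"
  using cover hB by fastforce
lemma hD: "x \<in> S \<Longrightarrow> rat01 r \<Longrightarrow> hv F x < of_rat r \<Longrightarrow> r \<in> Up F x"
  using cover hA by fastforce
lemma approxL: "x \<in> S \<Longrightarrow> (0::real) < d \<Longrightarrow> \<exists>r \<in> Lo F x. hv F x - d < of_rat r"
proof -
  assume x: "x \<in> S" and d: "0 < d"
  show ?thesis
  proof (cases "hv F x - d < 0")
    case True thus ?thesis using L0[OF x] by force
  next
    case False
    have "hv F x - d < hv F x" using d by simp
    then obtain q where q: "hv F x - d < of_rat q" "of_rat q < hv F x" using of_rat_dense by blast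
    have "0 \<le> real_of_rat q" "real_of_rat q \<le> 1" using q False h01[OF x] by linarith+
    hence "rat01 q" by (simp add: rat01_def)
    thus ?thesis using hC[OF x _ q(2)] q(1) by blast
  qed
qed
lemma approxU: "x \<in> S \<Longrightarrow> (0::real) < d \<Longrightarrow> \<exists>r \<in> Up F x. of_rat r < hv F x + d"
proof -
  assume x: "x \<in> S" and d: "0 < d"
  show ?thesis
  proof (cases "1 < hv F x + d")
    case True thus ?thesis using U1[OF x] by force
  next
    case False
    have "hv F x < hv F x + d" using d by simp
    then obtain q where q: "hv F x < of_rat q" "of_rat q < hv F x + d" using of_rat_dense by blast
    have "0 \<le> real_of_rat q" "real_of_rat q \<le> 1" using q False h01[OF x] by linarith+
    hence "rat01 q" by (simp add: rat01_def)
    thus ?thesis using hD[OF x _ q(1)] q(2) by blast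
  qed
qed

lemma h_c: "rat01 r \<Longrightarrow> hv F (c r) = of_rat r"
proof -
  assume r: "rat01 r"
  have "imp (c r) (c r) = one" using r by (simp add: c_imp_one)
  hence "r \<in> Lo F (c r)" "r \<in> Up F (c r)" using r oneF by (auto simp: Lo_def Up_def)
  thus ?thesis using hA hB r by (meson cS order.antisym)
qed

lemma Lo_pl: "x \<in> S \<Longrightarrow> y \<in> S \<Longrightarrow> r \<in> Lo F x \<Longrightarrow> s \<in> Lo F y \<Longrightarrow> min (r + s) 1 \<in> Lo F (pl x y)"
proof -
  assume x: "x \<in> S" and y: "y \<in> S" and r: "r \<in> Lo F x" and s: "s \<in> Lo F y"
  have rs: "rat01 r" "rat01 s" using r s by (auto simp: Lo_def)
  have "mul (imp (c r) x) (imp (c s) y) \<in> F" using r s filt_mul f by (auto simp: Lo_def)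
  hence "imp (pl (c r) (c s)) (pl x y) \<in> F" using filt_up[OF f _ _ pl_compat] x y rs by simp
  thus ?thesis using c_pl rs rat01_min by (simp add: Lo_def)
qed
lemma Up_pl: "x \<in> S \<Longrightarrow> y \<in> S \<Longrightarrow> r \<in> Up F x \<Longrightarrow> s \<in> Up F y \<Longrightarrow> min (r + s) 1 \<in> Up F (pl x y)"
proof -
  assume x: "x \<in> S" and y: "y \<in> S" and r: "r \<in> Up F x" and s: "s \<in> Up F y"
  have rs: "rat01 r" "rat01 s" using r s by (auto simp: Up_def)
  have "mul (imp x (c r)) (imp y (c s)) \<in> F" using r s filt_mul f by (auto simp: Up_def)
  hence "imp (pl x y) (pl (c r) (c s)) \<in> F" using filt_up[OF f _ _ pl_compat] x y rs by simp
  thus ?thesis using c_pl rs rat01_min by (simp add: Up_def)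
qed
lemma Lo_ng: "x \<in> S \<Longrightarrow> rat01 r \<Longrightarrow> r \<in> Lo F (ng x) \<longleftrightarrow> 1 - r \<in> Up F x"
  using rat01_1m by (simp add: Lo_def Up_def mv_imp_def c_ng comm)

lemma h_pl: "x \<in> S \<Longrightarrow> y \<in> S \<Longrightarrow> hv F (pl x y) = min (hv F x + hv F y) 1"
proof (rule order.antisym)
  assume x: "x \<in> S" and y: "y \<in> S"
  show "min (hv F x + hv F y) 1 \<le> hv F (pl x y)"
  proof (rule field_le_epsilon)
    fix e :: real assume e: "0 < e"
    obtain r where r: "r \<in> Lo F x" "hv F x - e/2 < of_rat r" using approxL[OF x, of "e/2"] e by auto
    obtain s where s: "s \<in> Lo F y" "hv F y - e/2 < of_rat s" using approxL[OF y, of "e/2"] e by auto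
    have "of_rat (min (r + s) 1) \<le> hv F (pl x y)" using hA Lo_pl x y r s by simp
    hence "min (of_rat r + of_rat s) 1 \<le> hv F (pl x y)" by (simp add: of_rat_add of_rat_min)
    thus "min (hv F x + hv F y) 1 \<le> hv F (pl x y) + e" using r s e by (auto simp: min_def split: if_splits)
  qed
  show "hv F (pl x y) \<le> min (hv F x + hv F y) 1"
  proof (rule field_le_epsilon)
    fix e :: real assume e: "0 < e"
    obtain r where r: "r \<in> Up F x" "of_rat r < hv F x + e/2" using approxU[OF x, of "e/2"] e by auto
    obtain s where s: "s \<in> Up F y" "of_rat s < hv F y + e/2" using approxU[OF y, of "e/2"] e by auto
    have "hv F (pl x y) \<le> of_rat (min (r + s) 1)" using hB Up_pl x y r s by simp
    hence "hv F (pl x y) \<le> min (of_rat r + of_rat s) 1" by (simp add: of_rat_add of_rat_min)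
    thus "hv F (pl x y) \<le> min (hv F x + hv F y) 1 + e" using r s e by (auto simp: min_def split: if_splits)
  qed
qed
lemma h_ng: "x \<in> S \<Longrightarrow> hv F (ng x) = 1 - hv F x"
proof (rule order.antisym)
  assume x: "x \<in> S"
  show "1 - hv F x \<le> hv F (ng x)"
  proof (rule field_le_epsilon)
    fix e :: real assume e: "0 < e"
    obtain r where r: "r \<in> Up F x" "of_rat r < hv F x + e" using approxU[OF x e] by auto
    have "rat01 r" using r by (simp add: Up_def)
    hence "1 - r \<in> Lo F (ng x)" using Lo_ng[OF x, of "1 - r"] r rat01_1m by simp
    hence "of_rat (1 - r) \<le> hv F (ng x)" using hA x by simp
    thus "1 - hv F x \<le> hv F (ng x) + e" using r by (simp add: of_rat_diff)
  qed
  show "hv F (ng x) \<le> 1 - hv F x"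
  proof (rule field_le_epsilon)
    fix e :: real assume e: "0 < e"
    obtain r where r: "r \<in> Lo F (ng x)" "hv F (ng x) - e < of_rat r" using approxL[OF _ e, of "ng x"] x by auto
    have "rat01 r" using r by (simp add: Lo_def)
    hence "1 - r \<in> Up F x" using Lo_ng[OF x] r by simp
    hence "hv F x \<le> of_rat (1 - r)" using hB x by simp
    thus "hv F (ng x) \<le> 1 - hv F x + e" using r by (simp add: of_rat_diff)
  qed
qed
lemma h_mul: "x \<in> S \<Longrightarrow> y \<in> S \<Longrightarrow> hv F (mul x y) = max 0 (hv F x + hv F y - 1)"
  by (simp add: mv_mult_def h_ng h_pl min_def max_def)
lemma h_pw: "x \<in> S \<Longrightarrow> hv F (pw x n) = max 0 (of_nat n * hv F x - (of_nat n - 1))"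
proof (induct n)
  case 0 thus ?case using h_c[of 1] by (simp add: one_c)
next
  case (Suc n) thus ?case using h01[OF Suc.prems] by (simp add: pwSuc h_mul max_def algebra_simps)
qed
lemma h_one_iff: "x \<in> S \<Longrightarrow> hv F x = 1 \<longleftrightarrow> x \<in> F"
proof
  assume x: "x \<in> S" and xF: "x \<in> F"
  have "imp (c 1) x = x" using x by (simp add: mv_imp_def c_ng)
  hence "1 \<in> Lo F x" using xF by (simp add: Lo_def)
  thus "hv F x = 1" using hA[OF x] h01[OF x] by force
next
  assume x: "x \<in> S" and h: "hv F x = 1"
  show "x \<in> F"
  proof (rule ccontr)
    assume "x \<notin> F"
    then obtain n where n: "ng (pw x n) \<in> F" using maxf_M1[OF m x] by auto
    have "hv F (ng (pw x n)) = 1"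
    proof -
      have "imp (c 1) (ng (pw x n)) = ng (pw x n)" using x by (simp add: mv_imp_def c_ng)
      hence "1 \<in> Lo F (ng (pw x n))" using n by (simp add: Lo_def)
      thus ?thesis using hA[of "ng (pw x n)"] h01[of "ng (pw x n)"] x by force
    qed
    hence "hv F (pw x n) = 0" using h_ng x by simp
    thus False using h_pw[OF x, of n] h by simp
  qed
qed
end


lemma maxf_iff: "max_filter A F \<longleftrightarrow> maxf F"
  by (simp add: max_filter_def maxf_def pfilter_def filt_def)
lemma specM_iff: "F \<in> specM A \<longleftrightarrow> maxf F" by (simp add: specM_def maxf_iff)

lemma hom_exists: "maxf F \<Longrightarrow> std_hom A (restrict (hv F) S) \<and> {y \<in> S. restrict (hv F) S y = 1} = F"
proof -
  assume m: "maxf F"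
  have "std_hom A (restrict (hv F) S)" unfolding std_hom_def
    using h01[OF m] h_pl[OF m] h_ng[OF m] h_c[OF m] by (auto simp: rat01_def)
  moreover have "{y \<in> S. restrict (hv F) S y = 1} = F" using h_one_iff[OF m] FS[OF m] by auto
  ultimately show ?thesis by simp
qed

lemma std_hom_unique:
  assumes h1: "std_hom A h1" and h2: "std_hom A h2" and e: "{y \<in> S. h1 y = 1} = {y \<in> S. h2 y = 1}"
  shows "h1 = h2"
proof -
  have le: "ha x \<le> hb x" if x: "x \<in> S" and ha: "std_hom A ha" and hb: "std_hom A hb"
     and e: "{y \<in> S. ha y = 1} = {y \<in> S. hb y = 1}" for x ha hb
  proof (rule ccontr)
    assume "\<not> ha x \<le> hb x"
    hence lt: "hb x < ha x" by simp
    then obtain q where q: "hb x < of_rat q" "of_rat q < ha x" using of_rat_dense by blast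
    have r01: "0 \<le> hb x" "ha x \<le> 1" using ha hb x by (auto simp: std_hom_def)
    hence "0 \<le> real_of_rat q" "real_of_rat q \<le> 1" using q by linarith+
    hence r: "rat01 q" by (simp add: rat01_def)
    have iS: "imp (c q) x \<in> S" using r x by simp
    have "ha (imp (c q) x) = min (1 - of_rat q + ha x) 1"
      using ha x r rat01_1m[OF r] by (simp add: std_hom_def mv_imp_def c_ng of_rat_diff)
    hence "ha (imp (c q) x) = 1" using q by simp
    hence "hb (imp (c q) x) = 1" using e iS by blast
    moreover have "hb (imp (c q) x) = min (1 - of_rat q + hb x) 1"
      using hb x r rat01_1m[OF r] by (simp add: std_hom_def mv_imp_def c_ng of_rat_diff)
    ultimately show False using q by simp
  qed
  show ?thesis
  proof
    fix x show "h1 x = h2 x"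
    proof (cases "x \<in> S")
      case True thus ?thesis using le[OF True h1 h2 e] le[OF True h2 h1 e[symmetric]] by simp
    next
      case False thus ?thesis using h1 h2 by (simp add: std_hom_def extensional_def)
    qed
  qed
qed

lemma qval_eq: "maxf F \<Longrightarrow> qval A F = restrict (hv F) S"
proof -
  assume m: "maxf F"
  have "(THE h. std_hom A h \<and> {y \<in> S. h y = 1} = F) = restrict (hv F) S"
    by (rule the_equality) (use hom_exists[OF m] std_hom_unique in auto)
  thus ?thesis by (simp add: qval_def[abs_def])
qed

context fixes F assumes m: "maxf F"
begin
lemma q01: "x \<in> S \<Longrightarrow> 0 \<le> qval A F x \<and> qval A F x \<le> 1" using h01[OF m] qval_eq[OF m] by simp
lemma q_pl: "x \<in> S \<Longrightarrow> y \<in> S \<Longrightarrow> qval A F (pl x y) = min (qval A F x + qval A F y) 1"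
  using h_pl[OF m] qval_eq[OF m] by simp
lemma q_ng: "x \<in> S \<Longrightarrow> qval A F (ng x) = 1 - qval A F x" using h_ng[OF m] qval_eq[OF m] by simp
lemma q_c: "rat01 r \<Longrightarrow> qval A F (c r) = of_rat r" using h_c[OF m] qval_eq[OF m] by simp
lemma q_one_iff: "x \<in> S \<Longrightarrow> qval A F x = 1 \<longleftrightarrow> x \<in> F" using h_one_iff[OF m] qval_eq[OF m] by simp
lemma q_imp: "x \<in> S \<Longrightarrow> y \<in> S \<Longrightarrow> qval A F (imp x y) = std_imp (qval A F x) (qval A F y)"
  by (simp add: mv_imp_def q_pl q_ng std_imp_def min.commute)
lemma q_mul: "x \<in> S \<Longrightarrow> y \<in> S \<Longrightarrow> qval A F (mul x y) = std_mult (qval A F x) (qval A F y)"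
  by (simp add: mv_mult_def q_pl q_ng std_mult_def min_def max_def)
lemma q_one: "qval A F one = 1" using q_c[of 1] by (simp add: one_c)
lemma q_le: "x \<in> S \<Longrightarrow> y \<in> S \<Longrightarrow> le x y \<Longrightarrow> qval A F x \<le> qval A F y"
proof -
  assume x: "x \<in> S" and y: "y \<in> S" and "le x y"
  hence "imp x y = one" by (simp add: mv_le_def mv_imp_def)
  hence "std_imp (qval A F x) (qval A F y) = 1" using q_imp[OF x y] q_one by simp
  thus ?thesis by (simp add: std_imp_def min_def split: if_splits)
qed
end


lemma ss_sep:
  assumes ss: "semisimple TYPE('i) TYPE('b) A" and x: "x \<in> S" and y: "y \<in> S"
    and le: "\<forall>F\<in>specM A. qval A F x \<le> qval A F y"
  shows "le x y"
proof -
  obtain I :: "'i set" and T :: "'i \<Rightarrow> 'b set" and pl' ng' z' h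
    where sd: "mv_subdirect_simple S pl ng z I T pl' ng' z' h"
    using ss unfolding semisimple_def by blast
  show ?thesis
  proof (rule ccontr)
    assume nle: "\<not> le x y"
    hence "imp x y \<noteq> one" by (simp add: mv_le_def mv_imp_def)
    then obtain i where i: "i \<in> I" "h i (imp x y) \<noteq> h i one"
      using sd x y unfolding mv_subdirect_simple_def by (meson impS ngS zS)
    have sim: "mv_simple (T i) (pl' i) (ng' i) (z' i)" and hom: "mv_hom S pl ng z (T i) (pl' i) (ng' i) (z' i) (h i)"
      and sur: "h i ` S = T i" using sd i by (auto simp: mv_subdirect_simple_def)
    let ?K = "{x \<in> S. h i x = ng' i (z' i)}"
    have mK: "maxf ?K" by (rule kernel_max[OF sim hom sur])
    hence "?K \<in> specM A" by (simp add: specM_iff)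
    hence "qval A ?K x \<le> qval A ?K y" using le by blast
    hence "qval A ?K (imp x y) = 1" using q_imp[OF mK x y] by (simp add: std_imp_def)
    hence "imp x y \<in> ?K" using q_one_iff[OF mK] x y by simp
    hence "h i (imp x y) = ng' i (z' i)" by simp
    moreover have "h i one = ng' i (z' i)" using hom by (simp add: mv_hom_def)
    ultimately show False using i by simp
  qed
qed

end



lemma inf01_lower: "i \<in> I \<Longrightarrow> \<forall>k\<in>I. 0 \<le> f k \<Longrightarrow> inf01 (f ` I) \<le> f i"
  unfolding inf01_def by (auto intro!: cInf_lower bdd_belowI[of _ 0])
lemma inf01_greatest: "\<forall>i\<in>I. c \<le> f i \<Longrightarrow> c \<le> 1 \<Longrightarrow> c \<le> inf01 (f ` I)"
  unfolding inf01_def by (auto intro!: cInf_greatest)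
lemma inf01_01: "\<forall>i\<in>I. f i \<in> {0..1} \<Longrightarrow> inf01 (f ` I) \<in> {0..1}"
proof -
  assume a: "\<forall>i\<in>I. f i \<in> {0..1}"
  show ?thesis
  proof (cases "I = {}")
    case True thus ?thesis by (simp add: inf01_def)
  next
    case False
    then obtain i where i: "i \<in> I" by auto
    have "inf01 (f ` I) \<le> f i" using inf01_lower[OF i] a by auto
    moreover have "0 \<le> inf01 (f ` I)" using inf01_greatest[of I 0 f] a by auto
    ultimately show ?thesis using a i by auto
  qed
qed
lemma sup01_upper: "i \<in> I \<Longrightarrow> \<forall>k\<in>I. f k \<le> 1 \<Longrightarrow> f i \<le> sup01 (f ` I)"
  unfolding sup01_def by (auto intro!: cSup_upper bdd_aboveI[of _ 1])
lemma sup01_least: "\<forall>i\<in>I. f i \<le> c \<Longrightarrow> 0 \<le> c \<Longrightarrow> sup01 (f ` I) \<le> c"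
  unfolding sup01_def by (auto intro!: cSup_least)
lemma sup01_01: "\<forall>i\<in>I. f i \<in> {0..1} \<Longrightarrow> sup01 (f ` I) \<in> {0..1}"
proof -
  assume a: "\<forall>i\<in>I. f i \<in> {0..1}"
  show ?thesis
  proof (cases "I = {}")
    case True thus ?thesis by (simp add: sup01_def)
  next
    case False
    then obtain i where i: "i \<in> I" by auto
    have "f i \<le> sup01 (f ` I)" using sup01_upper[OF i] a by auto
    moreover have "sup01 (f ` I) \<le> 1" using sup01_least[of I f 1] a by auto
    ultimately show ?thesis using a i by auto
  qed
qed
lemma inf01_approx: "I \<noteq> {} \<Longrightarrow> \<forall>k\<in>I. 0 \<le> f k \<Longrightarrow> (0::real) < e \<Longrightarrow> \<exists>i\<in>I. f i < inf01 (f ` I) + e"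
proof -
  assume ne: "I \<noteq> {}" and b: "\<forall>k\<in>I. 0 \<le> f k" and e: "0 < e"
  have "Inf (f ` I) < Inf (f ` I) + e" using e by simp
  hence "\<exists>x\<in>f ` I. x < Inf (f ` I) + e" using ne b
    by (subst cInf_less_iff[symmetric]) (auto intro!: bdd_belowI[of _ 0])
  thus ?thesis using ne by (auto simp: inf01_def)
qed
lemma sup01_approx: "I \<noteq> {} \<Longrightarrow> \<forall>k\<in>I. f k \<le> 1 \<Longrightarrow> (0::real) < e \<Longrightarrow> \<exists>i\<in>I. sup01 (f ` I) - e < f i"
proof -
  assume ne: "I \<noteq> {}" and b: "\<forall>k\<in>I. f k \<le> 1" and e: "0 < e"
  have "Sup (f ` I) - e < Sup (f ` I)" using e by simp
  hence "\<exists>x\<in>f ` I. Sup (f ` I) - e < x" using ne b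
    by (subst less_cSup_iff[symmetric]) (auto intro!: bdd_aboveI[of _ 1])
  thus ?thesis using ne by (auto simp: sup01_def)
qed

lemma restrict_eqI: "(\<And>i. i \<in> I \<Longrightarrow> f i = g i) \<Longrightarrow> restrict f I = restrict g I"
  by (auto simp: restrict_def)

lemma pp_le: "p_le (power_pav I) x y \<longleftrightarrow> (\<forall>i\<in>I. x i \<le> y i)"
proof -
  have "p_le (power_pav I) x y \<longleftrightarrow> restrict (\<lambda>i. min (1 - x i + y i) 1) I = restrict (\<lambda>i. 1) I"
    by (simp add: p_le_def mv_le_def power_pav_def cong: restrict_cong)
  also have "\<dots> \<longleftrightarrow> (\<forall>i\<in>I. min (1 - x i + y i) 1 = (1::real))"
    by (auto simp: restrict_def fun_eq_iff split: if_splits)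
  also have "\<dots> \<longleftrightarrow> (\<forall>i\<in>I. x i \<le> y i)" by (auto simp: min_def)
  finally show ?thesis .
qed

lemma std_resid: "0 \<le> (b::real) \<Longrightarrow> a \<le> 1 \<Longrightarrow> std_mult r a \<le> b \<longleftrightarrow> a \<le> std_imp r b"
  by (auto simp: std_mult_def std_imp_def)

lemma shift_imp: "0 \<le> (a::real) \<Longrightarrow> a \<le> 1 \<Longrightarrow> 0 \<le> b \<Longrightarrow> b \<le> 1 \<Longrightarrow> 0 \<le> p \<Longrightarrow> p \<le> 1 \<Longrightarrow>
  std_imp a (min (1 - p + b) 1) = min (1 - p + std_imp a b) 1"
  by (auto simp: std_imp_def min_def)

lemma inf01_shift:
  assumes b: "\<forall>i\<in>I. 0 \<le> f i \<and> f i \<le> (1::real)" and p: "0 \<le> p" "p \<le> 1"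
  shows "inf01 ((\<lambda>i. min (1 - p + f i) 1) ` I) = min (1 - p + inf01 (f ` I)) 1"
proof (cases "I = {}")
  case True thus ?thesis using p by (simp add: inf01_def)
next
  case False
  define h where "h = (\<lambda>i. min (1 - p + f i) 1)"
  have i01: "inf01 (f ` I) \<in> {0..1}" using inf01_01[of I f] b by auto
  have "min (1 - p + inf01 (f ` I)) 1 \<le> inf01 (h ` I)"
  proof (rule inf01_greatest)
    show "\<forall>i\<in>I. min (1 - p + inf01 (f ` I)) 1 \<le> h i"
    proof
      fix i assume i: "i \<in> I"
      have "inf01 (f ` I) \<le> f i" using inf01_lower[OF i, of f] b by auto
      thus "min (1 - p + inf01 (f ` I)) 1 \<le> h i" by (simp add: h_def min_def)
    qed
  qed simp
  moreover have "inf01 (h ` I) \<le> min (1 - p + inf01 (f ` I)) 1"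
  proof (rule field_le_epsilon)
    fix e :: real assume e: "0 < e"
    obtain i where i: "i \<in> I" "f i < inf01 (f ` I) + e" using inf01_approx[OF False _ e, of f] b by auto
    have "inf01 (h ` I) \<le> h i"
      using inf01_lower[OF i(1), of h] b p by (auto simp: h_def)
    moreover have "h i \<le> min (1 - p + inf01 (f ` I)) 1 + e" using i e by (simp add: h_def min_def)
    ultimately show "inf01 (h ` I) \<le> min (1 - p + inf01 (f ` I)) 1 + e" by linarith
  qed
  ultimately have "inf01 (h ` I) = min (1 - p + inf01 (f ` I)) 1" by linarith
  thus ?thesis by (simp add: h_def)
qed

lemma std_imp_nonneg: "a \<le> 1 \<Longrightarrow> 0 \<le> b \<Longrightarrow> 0 \<le> std_imp a (b::real)" by (simp add: std_imp_def)
lemma std_mult_le1: "a \<le> 1 \<Longrightarrow> b \<le> 1 \<Longrightarrow> std_mult a (b::real) \<le> 1" by (simp add: std_mult_def)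
lemma std_imp01: "0 \<le> a \<Longrightarrow> a \<le> 1 \<Longrightarrow> 0 \<le> b \<Longrightarrow> b \<le> 1 \<Longrightarrow> std_imp a b \<in> {0..(1::real)}"
  by (auto simp: std_imp_def)
lemma std_mult01: "0 \<le> a \<Longrightarrow> a \<le> 1 \<Longrightarrow> 0 \<le> b \<Longrightarrow> b \<le> 1 \<Longrightarrow> std_mult a b \<in> {0..(1::real)}"
  by (auto simp: std_mult_def)

theorem part1:
  fixes I :: "'i set" and J :: "'j set" and R :: "'i \<Rightarrow> 'j \<Rightarrow> real"
  assumes R: "\<forall>i\<in>I. \<forall>j\<in>J. R i j \<in> {0..1}"
  shows "strong_ladj (power_pav I) (power_pav J) (fR I J R) (gR I J R)"
proof -
  have carA: "pcar (power_pav I) = I \<rightarrow>\<^sub>E {0..1}" and carB: "pcar (power_pav J) = J \<rightarrow>\<^sub>E {0..1}"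
    by (simp_all add: power_pav_def)
  have fRv: "\<And>x j. j \<in> J \<Longrightarrow> fR I J R x j = inf01 ((\<lambda>i. std_imp (R i j) (x i)) ` I)" by (simp add: fR_def)
  have gRv: "\<And>y i. i \<in> I \<Longrightarrow> gR I J R y i = sup01 ((\<lambda>j. std_mult (R i j) (y j)) ` J)" by (simp add: gR_def)
  have f01: "fR I J R x j \<in> {0..1}" if x: "x \<in> I \<rightarrow>\<^sub>E {0..1}" and j: "j \<in> J" for x j
  proof -
    have "\<forall>i\<in>I. std_imp (R i j) (x i) \<in> {0..1}"
    proof
      fix i assume i: "i \<in> I"
      show "std_imp (R i j) (x i) \<in> {0..1}" using R i j x by (intro std_imp01) auto
    qed
    thus ?thesis unfolding fRv[OF j] by (rule inf01_01)
  qed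
  have g01: "gR I J R y i \<in> {0..1}" if y: "y \<in> J \<rightarrow>\<^sub>E {0..1}" and i: "i \<in> I" for y i
  proof -
    have "\<forall>j\<in>J. std_mult (R i j) (y j) \<in> {0..1}"
    proof
      fix j assume j: "j \<in> J"
      show "std_mult (R i j) (y j) \<in> {0..1}" using R i j y by (intro std_mult01) auto
    qed
    thus ?thesis unfolding gRv[OF i] by (rule sup01_01)
  qed
  have fC: "\<forall>x\<in>pcar (power_pav I). fR I J R x \<in> pcar (power_pav J)"
    using f01 by (auto simp: carA carB fR_def)
  have gC: "\<forall>y\<in>pcar (power_pav J). gR I J R y \<in> pcar (power_pav I)"
    using g01 by (auto simp: carA carB gR_def)
  have adj: "\<forall>y\<in>pcar (power_pav I). \<forall>x\<in>pcar (power_pav J).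
      p_le (power_pav J) x (fR I J R y) \<longleftrightarrow> p_le (power_pav I) (gR I J R x) y"
  proof (intro ballI)
    fix y x assume y: "y \<in> pcar (power_pav I)" and x: "x \<in> pcar (power_pav J)"
    have y01: "\<forall>i\<in>I. 0 \<le> y i \<and> y i \<le> 1" and x01: "\<forall>j\<in>J. 0 \<le> x j \<and> x j \<le> 1"
      using x y by (auto simp: carA carB)
    have "p_le (power_pav J) x (fR I J R y) \<longleftrightarrow> (\<forall>j\<in>J. \<forall>i\<in>I. x j \<le> std_imp (R i j) (y i))"
    proof -
      have "\<And>j. j \<in> J \<Longrightarrow> x j \<le> fR I J R y j \<longleftrightarrow> (\<forall>i\<in>I. x j \<le> std_imp (R i j) (y i))"
      proof
        fix j assume j: "j \<in> J" "x j \<le> fR I J R y j"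
        show "\<forall>i\<in>I. x j \<le> std_imp (R i j) (y i)"
        proof
          fix i assume i: "i \<in> I"
          have "\<forall>k\<in>I. 0 \<le> std_imp (R k j) (y k)" using R y01 j by (auto intro!: std_imp_nonneg)
          hence "fR I J R y j \<le> std_imp (R i j) (y i)" using inf01_lower[OF i, of "\<lambda>i. std_imp (R i j) (y i)"] j by (simp add: fRv)
          thus "x j \<le> std_imp (R i j) (y i)" using j by linarith
        qed
      next
        fix j assume j: "j \<in> J" "\<forall>i\<in>I. x j \<le> std_imp (R i j) (y i)"
        thus "x j \<le> fR I J R y j" using x01 by (auto simp: fRv intro!: inf01_greatest)
      qed
      thus ?thesis by (simp add: pp_le)
    qed
    also have "\<dots> \<longleftrightarrow> (\<forall>i\<in>I. \<forall>j\<in>J. std_mult (R i j) (x j) \<le> y i)"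
    proof -
      have "\<And>i j. i \<in> I \<Longrightarrow> j \<in> J \<Longrightarrow> x j \<le> std_imp (R i j) (y i) \<longleftrightarrow> std_mult (R i j) (x j) \<le> y i"
        using std_resid x01 y01 by simp
      thus ?thesis by blast
    qed
    also have "\<dots> \<longleftrightarrow> p_le (power_pav I) (gR I J R x) y"
    proof -
      have "\<And>i. i \<in> I \<Longrightarrow> gR I J R x i \<le> y i \<longleftrightarrow> (\<forall>j\<in>J. std_mult (R i j) (x j) \<le> y i)"
      proof
        fix i assume i: "i \<in> I" "gR I J R x i \<le> y i"
        show "\<forall>j\<in>J. std_mult (R i j) (x j) \<le> y i"
        proof
          fix j assume j: "j \<in> J"
          have "\<forall>k\<in>J. std_mult (R i k) (x k) \<le> 1" using R x01 i by (auto intro!: std_mult_le1)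
          hence "std_mult (R i j) (x j) \<le> gR I J R x i" using sup01_upper[OF j, of "\<lambda>j. std_mult (R i j) (x j)"] i by (simp add: gRv)
          thus "std_mult (R i j) (x j) \<le> y i" using i by linarith
        qed
      next
        fix i assume i: "i \<in> I" "\<forall>j\<in>J. std_mult (R i j) (x j) \<le> y i"
        thus "gR I J R x i \<le> y i" using y01 by (auto simp: gRv intro!: sup01_least)
      qed
      thus ?thesis by (simp add: pp_le)
    qed
    finally show "p_le (power_pav J) x (fR I J R y) \<longleftrightarrow> p_le (power_pav I) (gR I J R x) y" .
  qed
  have monf: "\<forall>x\<in>pcar (power_pav I). \<forall>y\<in>pcar (power_pav I).
      p_le (power_pav I) x y \<longrightarrow> p_le (power_pav J) (fR I J R x) (fR I J R y)"
  proof (intro ballI impI)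
    fix x y assume x: "x \<in> pcar (power_pav I)" and y: "y \<in> pcar (power_pav I)" and xy: "p_le (power_pav I) x y"
    have le: "\<forall>i\<in>I. x i \<le> y i" using xy by (simp add: pp_le)
    have "\<And>j. j \<in> J \<Longrightarrow> fR I J R x j \<le> fR I J R y j"
    proof -
      fix j assume j: "j \<in> J"
      show "fR I J R x j \<le> fR I J R y j" unfolding fRv[OF j]
      proof (rule inf01_greatest)
        show "\<forall>i\<in>I. inf01 ((\<lambda>i. std_imp (R i j) (x i)) ` I) \<le> std_imp (R i j) (y i)"
        proof
          fix i assume i: "i \<in> I"
          have "inf01 ((\<lambda>i. std_imp (R i j) (x i)) ` I) \<le> std_imp (R i j) (x i)"
          proof -
            have "\<forall>k\<in>I. 0 \<le> std_imp (R k j) (x k)" using R x j by (auto simp: carA intro!: std_imp_nonneg)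
            thus ?thesis using inf01_lower[OF i, of "\<lambda>i. std_imp (R i j) (x i)"] by simp
          qed
          also have "\<dots> \<le> std_imp (R i j) (y i)" using le i by (auto simp: std_imp_def)
          finally show "inf01 ((\<lambda>i. std_imp (R i j) (x i)) ` I) \<le> std_imp (R i j) (y i)" .
        qed
        show "inf01 ((\<lambda>i. std_imp (R i j) (x i)) ` I) \<le> 1" using f01[OF _ j, of x] x by (simp add: carA fRv[OF j])
      qed
    qed
    thus "p_le (power_pav J) (fR I J R x) (fR I J R y)" by (simp add: pp_le)
  qed
  have mong: "\<forall>x\<in>pcar (power_pav J). \<forall>y\<in>pcar (power_pav J).
      p_le (power_pav J) x y \<longrightarrow> p_le (power_pav I) (gR I J R x) (gR I J R y)"
  proof (intro ballI impI)
    fix x y assume x: "x \<in> pcar (power_pav J)" and y: "y \<in> pcar (power_pav J)" and xy: "p_le (power_pav J) x y"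
    have le: "\<forall>j\<in>J. x j \<le> y j" using xy by (simp add: pp_le)
    have "\<And>i. i \<in> I \<Longrightarrow> gR I J R x i \<le> gR I J R y i"
    proof -
      fix i assume i: "i \<in> I"
      show "gR I J R x i \<le> gR I J R y i" unfolding gRv[OF i]
      proof (rule sup01_least)
        show "\<forall>j\<in>J. std_mult (R i j) (x j) \<le> sup01 ((\<lambda>j. std_mult (R i j) (y j)) ` J)"
        proof
          fix j assume j: "j \<in> J"
          have "std_mult (R i j) (x j) \<le> std_mult (R i j) (y j)" using le j by (auto simp: std_mult_def)
          also have "\<dots> \<le> sup01 ((\<lambda>j. std_mult (R i j) (y j)) ` J)"
          proof -
            have "\<forall>k\<in>J. std_mult (R i k) (y k) \<le> 1" using R y i by (auto simp: carB intro!: std_mult_le1)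
            thus ?thesis using sup01_upper[OF j, of "\<lambda>j. std_mult (R i j) (y j)"] by simp
          qed
          finally show "std_mult (R i j) (x j) \<le> sup01 ((\<lambda>j. std_mult (R i j) (y j)) ` J)" .
        qed
        show "0 \<le> sup01 ((\<lambda>j. std_mult (R i j) (y j)) ` J)" using g01[OF _ i, of y] y by (simp add: carB gRv[OF i])
      qed
    qed
    thus "p_le (power_pav I) (gR I J R x) (gR I J R y)" by (simp add: pp_le)
  qed
  have strong: "\<forall>x\<in>pcar (power_pav I). \<forall>r. rat01 r \<longrightarrow>
      p_imp (power_pav J) (pcst (power_pav J) r) (fR I J R x) = fR I J R (p_imp (power_pav I) (pcst (power_pav I) r) x)"
  proof (intro ballI allI impI)
    fix x r assume x: "x \<in> pcar (power_pav I)" and r: "rat01 r"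
    let ?p = "real_of_rat r"
    have p: "0 \<le> ?p" "?p \<le> 1" using r by (auto simp: rat01_def)
    have x01: "\<forall>i\<in>I. 0 \<le> x i \<and> x i \<le> 1" using x by (auto simp: carA)
    have L: "p_imp (power_pav J) (pcst (power_pav J) r) (fR I J R x) = restrict (\<lambda>j. min (1 - ?p + fR I J R x j) 1) J"
      by (simp add: p_imp_def mv_imp_def power_pav_def cong: restrict_cong)
    have Rh: "p_imp (power_pav I) (pcst (power_pav I) r) x = restrict (\<lambda>i. min (1 - ?p + x i) 1) I"
      by (simp add: p_imp_def mv_imp_def power_pav_def cong: restrict_cong)
    show "p_imp (power_pav J) (pcst (power_pav J) r) (fR I J R x) = fR I J R (p_imp (power_pav I) (pcst (power_pav I) r) x)"
      unfolding L Rh unfolding fR_def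
    proof (rule restrict_eqI)
      fix j assume j: "j \<in> J"
      have "inf01 ((\<lambda>i. std_imp (R i j) (restrict (\<lambda>i. min (1 - ?p + x i) 1) I i)) ` I)
          = inf01 ((\<lambda>i. min (1 - ?p + std_imp (R i j) (x i)) 1) ` I)"
        using shift_imp R j x01 p by (intro arg_cong[where f=inf01] image_cong) auto
      also have "\<dots> = min (1 - ?p + inf01 ((\<lambda>i. std_imp (R i j) (x i)) ` I)) 1"
        using inf01_shift[of I "\<lambda>i. std_imp (R i j) (x i)" ?p] R j x01 p by (auto simp: std_imp_def)
      finally show "min (1 - ?p + restrict (\<lambda>j. inf01 ((\<lambda>i. std_imp (R i j) (x i)) ` I)) J j) 1 =
          inf01 ((\<lambda>i. std_imp (R i j) (restrict (\<lambda>i. min (1 - ?p + x i) 1) I i)) ` I)" using j by simp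
    qed
  qed
  show ?thesis unfolding strong_ladj_def using fC gC monf mong adj strong by blast
qed



lemma rat_pick: "0 \<le> lo \<Longrightarrow> lo \<le> 1 \<Longrightarrow> lo < (hi::real) \<Longrightarrow> \<exists>q. rat01 q \<and> lo \<le> of_rat q \<and> of_rat q < hi"
proof -
  assume a: "0 \<le> lo" "lo \<le> 1" "lo < hi"
  show ?thesis
  proof (cases "lo = 1")
    case True thus ?thesis using a by (intro exI[of _ 1]) (simp add: rat01_def)
  next
    case False
    hence "lo < min 1 hi" using a by simp
    then obtain q where q: "lo < of_rat q" "of_rat q < min 1 hi" using of_rat_dense by blast
    have "0 \<le> real_of_rat q" "real_of_rat q \<le> 1" using q a by linarith+
    hence "rat01 q" by (simp add: rat01_def)
    thus ?thesis using q by (intro exI[of _ q]) simp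
  qed
qed

lemma list_in_image: "set es \<subseteq> \<phi> ` X \<Longrightarrow> \<exists>bs. set bs \<subseteq> X \<and> es = map \<phi> bs"
proof (induct es)
  case Nil thus ?case by simp
next
  case (Cons e es)
  then obtain bs where bs: "set bs \<subseteq> X" "es = map \<phi> bs" by auto
  obtain b where b: "b \<in> X" "e = \<phi> b" using Cons.prems by auto
  show ?case using bs b by (intro exI[of _ "b # bs"]) simp
qed

context mvs begin
lemma compact2:
  assumes ES: "\<phi> ` X \<subseteq> S" and cov: "\<forall>F. maxf F \<longrightarrow> (\<exists>b\<in>X. \<phi> b \<notin> F)"
  shows "\<exists>bs. set bs \<subseteq> X \<and> (\<forall>F. maxf F \<longrightarrow> (\<exists>b\<in>set bs. \<phi> b \<notin> F))"
proof -
  have "\<forall>F. maxf F \<longrightarrow> (\<exists>e\<in>\<phi> ` X. e \<notin> F)" using cov by blast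
  then obtain es where es: "set es \<subseteq> \<phi> ` X" "\<forall>F. maxf F \<longrightarrow> (\<exists>e\<in>set es. e \<notin> F)"
    using compact[OF ES] by blast
  then obtain bs where bs: "set bs \<subseteq> X" "es = map \<phi> bs" using list_in_image by blast
  thus ?thesis using es(2) by (intro exI[of _ bs]) auto
qed
end

locale adjs = A: pav A + B: pav B for A :: "'a pav" and B :: "'b pav" +
  fixes f :: "'a \<Rightarrow> 'b" and g :: "'b \<Rightarrow> 'a"
  assumes ssA: "\<And>x y. x \<in> pcar A \<Longrightarrow> y \<in> pcar A \<Longrightarrow> (\<forall>F\<in>specM A. qval A F x \<le> qval A F y) \<Longrightarrow> p_le A x y"
  and ssB: "\<And>x y. x \<in> pcar B \<Longrightarrow> y \<in> pcar B \<Longrightarrow> (\<forall>F\<in>specM B. qval B F x \<le> qval B F y) \<Longrightarrow> p_le B x y"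
  and adj: "strong_ladj A B f g"
begin

lemma fS: "x \<in> A.S \<Longrightarrow> f x \<in> B.S" using adj by (simp add: strong_ladj_def)
lemma gS: "x \<in> B.S \<Longrightarrow> g x \<in> A.S" using adj by (simp add: strong_ladj_def)
lemma fmono: "x \<in> A.S \<Longrightarrow> y \<in> A.S \<Longrightarrow> A.le x y \<Longrightarrow> B.le (f x) (f y)"
  using adj unfolding strong_ladj_def p_le_def by blast
lemma gal: "y \<in> A.S \<Longrightarrow> x \<in> B.S \<Longrightarrow> B.le x (f y) \<longleftrightarrow> A.le (g x) y"
  using adj unfolding strong_ladj_def p_le_def by blast
lemma fstr: "x \<in> A.S \<Longrightarrow> rat01 r \<Longrightarrow> B.imp (B.c r) (f x) = f (A.imp (A.c r) x)"
  using adj by (simp add: strong_ladj_def p_imp_def)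

lemma leA: "x \<in> A.S \<Longrightarrow> y \<in> A.S \<Longrightarrow> A.le x y \<longleftrightarrow> (\<forall>F\<in>specM A. qval A F x \<le> qval A F y)"
  using ssA[of x y] A.q_le by (auto simp: p_le_def A.specM_iff)
lemma leB: "x \<in> B.S \<Longrightarrow> y \<in> B.S \<Longrightarrow> B.le x y \<longleftrightarrow> (\<forall>F\<in>specM B. qval B F x \<le> qval B F y)"
  using ssB[of x y] B.q_le by (auto simp: p_le_def B.specM_iff)

lemma unit: "y \<in> B.S \<Longrightarrow> B.le y (f (g y))" using gal gS by simp

lemma qA01: "F \<in> specM A \<Longrightarrow> x \<in> A.S \<Longrightarrow> 0 \<le> qval A F x \<and> qval A F x \<le> 1"
  using A.q01 by (simp add: A.specM_iff)
lemma qB01: "F \<in> specM B \<Longrightarrow> x \<in> B.S \<Longrightarrow> 0 \<le> qval B F x \<and> qval B F x \<le> 1"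
  using B.q01 by (simp add: B.specM_iff)

lemma f_c: "G \<in> specM B \<Longrightarrow> rat01 r \<Longrightarrow> of_rat r \<le> qval B G (f (A.c r))"
proof -
  assume G: "G \<in> specM B" and r: "rat01 r"
  have r1: "rat01 (1 - r)" using r A.rat01_1m by simp
  have "A.c r = A.imp (A.c (1 - r)) A.z" using A.c_ng[OF r1] r1 by simp
  hence "f (A.c r) = B.imp (B.c (1 - r)) (f A.z)" using fstr[OF _ r1] by simp
  hence "qval B G (f (A.c r)) = std_imp (of_rat (1 - r)) (qval B G (f A.z))"
    using G r1 B.q_imp B.q_c fS by (simp add: B.specM_iff)
  moreover have "0 \<le> qval B G (f A.z)" using qB01[OF G] fS by simp
  moreover have "real_of_rat r \<le> 1" using r by (simp add: rat01_def)
  ultimately show ?thesis by (simp add: std_imp_def of_rat_diff)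
qed

lemma f_mul: "G \<in> specM B \<Longrightarrow> x \<in> A.S \<Longrightarrow> rat01 r \<Longrightarrow>
   std_mult (qval B G (f x)) (of_rat r) \<le> qval B G (f (A.mul x (A.c r)))"
proof -
  assume G: "G \<in> specM B" and x: "x \<in> A.S" and r: "rat01 r"
  have mG: "B.maxf G" using G by (simp add: B.specM_iff)
  have "A.le x (A.imp (A.c r) (A.mul x (A.c r)))" using A.resid[of x "A.c r" "A.mul x (A.c r)"] x r by simp
  hence "B.le (f x) (f (A.imp (A.c r) (A.mul x (A.c r))))" using fmono x r by simp
  hence "B.le (f x) (B.imp (B.c r) (f (A.mul x (A.c r))))" using fstr x r by simp
  hence "qval B G (f x) \<le> qval B G (B.imp (B.c r) (f (A.mul x (A.c r))))"
    using B.q_le[OF mG] fS x r by simp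
  hence "qval B G (f x) \<le> std_imp (of_rat r) (qval B G (f (A.mul x (A.c r))))"
    using B.q_imp[OF mG] B.q_c[OF mG] fS x r by simp
  moreover have "0 \<le> qval B G (f (A.mul x (A.c r)))" using qB01[OF G] fS x r by simp
  ultimately show ?thesis by (simp add: std_imp_def std_mult_def)
qed

lemma f_one: "G \<in> specM B \<Longrightarrow> qval B G (f A.one) = 1"
proof -
  assume G: "G \<in> specM B"
  have mG: "B.maxf G" using G by (simp add: B.specM_iff)
  have "B.le B.one (f A.one)" using gal[of A.one B.one] gS[of B.one] by simp
  hence "1 \<le> qval B G (f A.one)" using B.q_le[OF mG] B.q_one[OF mG] fS by (metis A.oneS B.oneS)
  thus ?thesis using qB01[OF G] fS by (metis A.oneS order.antisym)
qed

definition meetA where "meetA a b = A.mul a (A.imp a b)"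
definition joinA where "joinA a b = A.imp (A.imp a b) b"
definition meetB where "meetB a b = B.mul a (B.imp a b)"
lemma meetAS[simp]: "a \<in> A.S \<Longrightarrow> b \<in> A.S \<Longrightarrow> meetA a b \<in> A.S" by (simp add: meetA_def)
lemma joinAS[simp]: "a \<in> A.S \<Longrightarrow> b \<in> A.S \<Longrightarrow> joinA a b \<in> A.S" by (simp add: joinA_def)
lemma meetBS[simp]: "a \<in> B.S \<Longrightarrow> b \<in> B.S \<Longrightarrow> meetB a b \<in> B.S" by (simp add: meetB_def)
lemma q_meetA: "F \<in> specM A \<Longrightarrow> a \<in> A.S \<Longrightarrow> b \<in> A.S \<Longrightarrow> qval A F (meetA a b) = min (qval A F a) (qval A F b)"
  using qA01[of F a] qA01[of F b] A.q_mul A.q_imp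
  by (auto simp: meetA_def A.specM_iff std_mult_def std_imp_def min_def max_def)
lemma q_joinA: "F \<in> specM A \<Longrightarrow> a \<in> A.S \<Longrightarrow> b \<in> A.S \<Longrightarrow> qval A F (joinA a b) = max (qval A F a) (qval A F b)"
  using qA01[of F a] qA01[of F b] A.q_imp
  by (auto simp: joinA_def A.specM_iff std_imp_def min_def max_def)
lemma q_meetB: "F \<in> specM B \<Longrightarrow> a \<in> B.S \<Longrightarrow> b \<in> B.S \<Longrightarrow> qval B F (meetB a b) = min (qval B F a) (qval B F b)"
  using qB01[of F a] qB01[of F b] B.q_mul B.q_imp
  by (auto simp: meetB_def B.specM_iff std_mult_def std_imp_def min_def max_def)

lemma f_meet: "G \<in> specM B \<Longrightarrow> a \<in> A.S \<Longrightarrow> b \<in> A.S \<Longrightarrow>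
   min (qval B G (f a)) (qval B G (f b)) \<le> qval B G (f (meetA a b))"
proof -
  assume G: "G \<in> specM B" and a: "a \<in> A.S" and b: "b \<in> A.S"
  let ?w = "meetB (f a) (f b)"
  have wS: "?w \<in> B.S" using fS a b by simp
  have "B.le ?w (f a)" using leB[OF wS fS[OF a]] q_meetB fS a b by simp
  hence 1: "A.le (g ?w) a" using gal a wS by simp
  have "B.le ?w (f b)" using leB[OF wS fS[OF b]] q_meetB fS a b by simp
  hence 2: "A.le (g ?w) b" using gal b wS by simp
  have "A.le (g ?w) (meetA a b)" using leA[OF gS[OF wS]] 1 2 leA a b gS[OF wS] q_meetA by simp
  hence "B.le ?w (f (meetA a b))" using gal a b wS by simp
  hence "qval B G ?w \<le> qval B G (f (meetA a b))" using leB wS fS a b G by simp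
  thus ?thesis using q_meetB[OF G] fS a b by simp
qed

definition meetl where "meetl bs = foldr meetA bs A.one"
definition joinl where "joinl bs = foldr joinA bs A.z"
lemma meetlS: "set bs \<subseteq> A.S \<Longrightarrow> meetl bs \<in> A.S" by (induct bs) (auto simp: meetl_def)
lemma joinlS: "set bs \<subseteq> A.S \<Longrightarrow> joinl bs \<in> A.S" by (induct bs) (auto simp: joinl_def)
lemma meetl_le: "F \<in> specM A \<Longrightarrow> set bs \<subseteq> A.S \<Longrightarrow> b \<in> set bs \<Longrightarrow> qval A F (meetl bs) \<le> qval A F b"
proof (induct bs)
  case Nil thus ?case by simp
next
  case (Cons c bs)
  have "qval A F (meetl (c # bs)) = min (qval A F c) (qval A F (meetl bs))"
    using q_meetA Cons meetlS by (simp add: meetl_def)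
  thus ?case using Cons by auto
qed
lemma joinl_ge: "F \<in> specM A \<Longrightarrow> set bs \<subseteq> A.S \<Longrightarrow> b \<in> set bs \<Longrightarrow> qval A F b \<le> qval A F (joinl bs)"
proof (induct bs)
  case Nil thus ?case by simp
next
  case (Cons c bs)
  have "qval A F (joinl (c # bs)) = max (qval A F c) (qval A F (joinl bs))"
    using q_joinA Cons joinlS by (simp add: joinl_def)
  thus ?case using Cons by auto
qed
lemma joinl_le: "F \<in> specM A \<Longrightarrow> set bs \<subseteq> A.S \<Longrightarrow> \<forall>b\<in>set bs. qval A F b \<le> t \<Longrightarrow> 0 \<le> t \<Longrightarrow> qval A F (joinl bs) \<le> t"
proof (induct bs)
  case Nil thus ?case using A.q_c[of F 0] by (simp add: joinl_def A.specM_iff)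
next
  case (Cons c bs)
  have "qval A F (joinl (c # bs)) = max (qval A F c) (qval A F (joinl bs))"
    using q_joinA Cons joinlS by (simp add: joinl_def)
  thus ?case using Cons by auto
qed
lemma f_meetl: "G \<in> specM B \<Longrightarrow> set bs \<subseteq> A.S \<Longrightarrow> \<forall>b\<in>set bs. L \<le> qval B G (f b) \<Longrightarrow> L \<le> 1 \<Longrightarrow>
   L \<le> qval B G (f (meetl bs))"
proof (induct bs)
  case Nil thus ?case using f_one by (simp add: meetl_def)
next
  case (Cons c bs)
  have "min (qval B G (f c)) (qval B G (f (meetl bs))) \<le> qval B G (f (meetl (c # bs)))"
    using f_meet[OF Cons.prems(1), of c "meetl bs"] Cons.prems meetlS by (simp add: meetl_def)
  thus ?case using Cons by auto
qed


definition Rr where "Rr F G = inf01 ((\<lambda>a. std_imp (qval B G (f a)) (qval A F a)) ` A.S)"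

lemma imp_nn: "F \<in> specM A \<Longrightarrow> G \<in> specM B \<Longrightarrow> \<forall>a\<in>A.S. 0 \<le> std_imp (qval B G (f a)) (qval A F a)"
  using qA01 qB01 fS by (auto intro!: std_imp_nonneg)
lemma R01: "F \<in> specM A \<Longrightarrow> G \<in> specM B \<Longrightarrow> 0 \<le> Rr F G \<and> Rr F G \<le> 1"
proof -
  assume F: "F \<in> specM A" and G: "G \<in> specM B"
  have "\<forall>a\<in>A.S. std_imp (qval B G (f a)) (qval A F a) \<in> {0..1}"
  proof
    fix a assume a: "a \<in> A.S"
    show "std_imp (qval B G (f a)) (qval A F a) \<in> {0..1}"
      using qA01[OF F a] qB01[OF G fS[OF a]] by (intro std_imp01) auto
  qed
  hence "Rr F G \<in> {0..1}" unfolding Rr_def by (rule inf01_01)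
  thus ?thesis by simp
qed
lemma R_le: "F \<in> specM A \<Longrightarrow> G \<in> specM B \<Longrightarrow> a \<in> A.S \<Longrightarrow> Rr F G \<le> std_imp (qval B G (f a)) (qval A F a)"
  unfolding Rr_def by (rule inf01_lower) (use imp_nn in auto)
lemma R_lt: "F \<in> specM A \<Longrightarrow> G \<in> specM B \<Longrightarrow> Rr F G < t \<Longrightarrow> \<exists>a\<in>A.S. std_imp (qval B G (f a)) (qval A F a) < t"
proof -
  assume F: "F \<in> specM A" and G: "G \<in> specM B" and t: "Rr F G < t"
  have ne: "A.S \<noteq> {}" using A.zS by blast
  obtain a where "a \<in> A.S" "std_imp (qval B G (f a)) (qval A F a) < Rr F G + (t - Rr F G)"
    using inf01_approx[OF ne imp_nn[OF F G], of "t - Rr F G"] t unfolding Rr_def by auto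
  thus ?thesis by auto
qed

lemma notin_iff: "F \<in> specM A \<Longrightarrow> y \<in> A.S \<Longrightarrow> b \<in> A.S \<Longrightarrow> A.imp y b \<notin> F \<longleftrightarrow> qval A F b < qval A F y"
proof -
  assume F: "F \<in> specM A" and y: "y \<in> A.S" and b: "b \<in> A.S"
  have m: "A.maxf F" using F by (simp add: A.specM_iff)
  have "A.imp y b \<notin> F \<longleftrightarrow> qval A F (A.imp y b) \<noteq> 1" using A.q_one_iff[OF m] y b by simp
  also have "\<dots> \<longleftrightarrow> qval A F b < qval A F y" using A.q_imp[OF m y b] qA01[OF F y] qA01[OF F b]
    by (auto simp: std_imp_def min_def)
  finally show ?thesis .
qed
lemma notin_iffB: "G \<in> specM B \<Longrightarrow> y \<in> B.S \<Longrightarrow> b \<in> B.S \<Longrightarrow> B.imp y b \<notin> G \<longleftrightarrow> qval B G b < qval B G y"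
proof -
  assume F: "G \<in> specM B" and y: "y \<in> B.S" and b: "b \<in> B.S"
  have m: "B.maxf G" using F by (simp add: B.specM_iff)
  have "B.imp y b \<notin> G \<longleftrightarrow> qval B G (B.imp y b) \<noteq> 1" using B.q_one_iff[OF m] y b by simp
  also have "\<dots> \<longleftrightarrow> qval B G b < qval B G y" using B.q_imp[OF m y b] qB01[OF F y] qB01[OF F b]
    by (auto simp: std_imp_def min_def)
  finally show ?thesis .
qed

theorem partY:
  assumes x: "x \<in> A.S" and G: "G \<in> specM B"
  shows "qval B G (f x) = inf01 ((\<lambda>F. std_imp (Rr F G) (qval A F x)) ` specM A)"
proof (rule order.antisym)
  define c where "c = qval B G (f x)"
  have c01: "0 \<le> c" "c \<le> 1" using qB01[OF G fS[OF x]] by (auto simp: c_def)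
  have mG: "B.maxf G" using G by (simp add: B.specM_iff)
  show "qval B G (f x) \<le> inf01 ((\<lambda>F. std_imp (Rr F G) (qval A F x)) ` specM A)"
  proof (rule inf01_greatest)
    show "\<forall>F\<in>specM A. qval B G (f x) \<le> std_imp (Rr F G) (qval A F x)"
    proof
      fix F assume F: "F \<in> specM A"
      have "Rr F G \<le> std_imp c (qval A F x)" using R_le[OF F G x] by (simp add: c_def)
      thus "qval B G (f x) \<le> std_imp (Rr F G) (qval A F x)"
        using c01 qA01[OF F x] R01[OF F G] by (auto simp: c_def std_imp_def min_def split: if_splits)
    qed
    show "qval B G (f x) \<le> 1" using c01 by (simp add: c_def)
  qed
  show "inf01 ((\<lambda>F. std_imp (Rr F G) (qval A F x)) ` specM A) \<le> qval B G (f x)"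
  proof (rule ccontr)
    define V where "V = inf01 ((\<lambda>F. std_imp (Rr F G) (qval A F x)) ` specM A)"
    assume "\<not> inf01 ((\<lambda>F. std_imp (Rr F G) (qval A F x)) ` specM A) \<le> qval B G (f x)"
    hence cV: "c < V" by (simp add: V_def c_def)
    have V01: "\<forall>F\<in>specM A. std_imp (Rr F G) (qval A F x) \<in> {0..1}"
    proof
      fix F assume F: "F \<in> specM A"
      show "std_imp (Rr F G) (qval A F x) \<in> {0..1}" using R01[OF F G] qA01[OF F x] by (intro std_imp01) auto
    qed
    hence Vnn: "\<forall>F\<in>specM A. 0 \<le> std_imp (Rr F G) (qval A F x)" by simp
    have V1: "V \<le> 1" using inf01_01[OF V01] by (simp add: V_def)
    obtain \<tau> where \<tau>: "c < of_rat \<tau>" "of_rat \<tau> < V" using of_rat_dense[OF cV] by blast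
    obtain tz where tz: "c < of_rat tz" "(of_rat tz :: real) < of_rat \<tau>" using of_rat_dense[OF \<tau>(1)] by blast
    have \<tau>1: "of_rat \<tau> < (1::real)" using \<tau> V1 by linarith
    have tzr: "0 < (of_rat \<tau> :: real)" using \<tau> c01 by linarith
    have "0 < \<tau>" "\<tau> < 1" using \<tau>1 tzr by simp_all
    hence r\<tau>: "rat01 \<tau>" by (simp add: rat01_def)
    define L where "L = 1 - \<tau> + tz"
    have L: "of_rat L = 1 - of_rat \<tau> + (of_rat tz :: real)" by (simp add: L_def of_rat_add of_rat_diff)
    have "0 \<le> (of_rat L :: real)" "(of_rat L :: real) \<le> 1" using L \<tau> tz c01 \<tau>1 by linarith+
    hence "0 \<le> L" "L \<le> 1" by simp_all
    hence rL: "rat01 L" by (simp add: rat01_def)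
    define y0 where "y0 = A.imp (A.c \<tau>) x"
    have y0S: "y0 \<in> A.S" using r\<tau> x by (simp add: y0_def)
    have qy0: "\<And>F. F \<in> specM A \<Longrightarrow> qval A F y0 = std_imp (of_rat \<tau>) (qval A F x)"
      using A.q_imp A.q_c r\<tau> x by (simp add: y0_def A.specM_iff)
    define X where "X = {b \<in> A.S. of_rat L \<le> qval B G (f b)}"
    have cov: "\<forall>F. A.maxf F \<longrightarrow> (\<exists>b\<in>X. A.imp y0 b \<notin> F)"
    proof (intro allI impI)
      fix F assume mF: "A.maxf F"
      hence F: "F \<in> specM A" by (simp add: A.specM_iff)
      define v where "v = qval A F x"
      have v01: "0 \<le> v" "v \<le> 1" using qA01[OF F x] by (auto simp: v_def)
      have "V \<le> std_imp (Rr F G) v" unfolding V_def v_def by (rule inf01_lower[OF F Vnn])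
      hence hv: "of_rat \<tau> < std_imp (Rr F G) v" using \<tau> by linarith
      have R01': "0 \<le> Rr F G" "Rr F G \<le> 1" using R01[OF F G] by auto
      show "\<exists>b\<in>X. A.imp y0 b \<notin> F"
      proof (cases "of_rat \<tau> \<le> v")
        case True
        have bX: "A.c L \<in> X" using f_c[OF G rL] rL by (simp add: X_def)
        have "qval A F (A.c L) < qval A F y0"
          using qy0[OF F] A.q_c[OF mF rL] True L tz \<tau>1 by (simp add: v_def std_imp_def)
        hence "A.imp y0 (A.c L) \<notin> F" using notin_iff[OF F y0S A.cS[OF rL]] by simp
        thus ?thesis using bX by blast
      next
        case False
        hence vt: "v < of_rat \<tau>" by simp
        have "Rr F G < 1 - of_rat \<tau> + v" using hv by (simp add: std_imp_def)
        then obtain a where a: "a \<in> A.S" "std_imp (qval B G (f a)) (qval A F a) < 1 - of_rat \<tau> + v"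
          using R_lt[OF F G] by blast
        define u where "u = qval B G (f a)"
        define w where "w = qval A F a"
        have u01: "0 \<le> u" "u \<le> 1" using qB01[OF G fS[OF a(1)]] by (auto simp: u_def)
        have w01: "0 \<le> w" "w \<le> 1" using qA01[OF F a(1)] by (auto simp: w_def)
        have key: "1 - u + w < 1 - of_rat \<tau> + v" using a(2) vt by (simp add: u_def w_def std_imp_def min_def split: if_splits)
        have qy0v: "qval A F y0 = 1 - of_rat \<tau> + v" using qy0[OF F] vt by (simp add: v_def std_imp_def)
        show ?thesis
        proof (cases "of_rat L \<le> u")
          case True
          obtain \<rho> where \<rho>: "rat01 \<rho>" "1 - u + of_rat L \<le> of_rat \<rho>" "of_rat \<rho> < 2 - of_rat \<tau> + v - w"
            using rat_pick[of "1 - u + of_rat L" "2 - of_rat \<tau> + v - w"] True u01 key L tz c01 \<tau>1 by auto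
          have \<rho>01: "0 \<le> (of_rat \<rho>::real)" "(of_rat \<rho>::real) \<le> 1" using \<rho>(1) by (auto simp: rat01_def)
          define b where "b = A.mul a (A.c \<rho>)"
          have bS: "b \<in> A.S" using a \<rho> by (simp add: b_def)
          have "std_mult u (of_rat \<rho>) \<le> qval B G (f b)" using f_mul[OF G a(1) \<rho>(1)] by (simp add: u_def b_def)
          hence "of_rat L \<le> qval B G (f b)" using \<rho> by (simp add: std_mult_def)
          hence bX: "b \<in> X" using bS by (simp add: X_def)
          have "qval A F b = std_mult w (of_rat \<rho>)" using A.q_mul[OF mF a(1)] A.q_c[OF mF \<rho>(1)] \<rho>(1) by (simp add: b_def w_def)
          moreover have "(0::real) < 1 - of_rat \<tau> + v" using \<tau>1 v01 by linarith
          ultimately have "qval A F b < qval A F y0" using qy0v \<rho> vt by (simp add: std_mult_def)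
          thus ?thesis using bX notin_iff[OF F y0S bS] by auto
        next
          case False
          obtain \<rho>' where \<rho>': "rat01 \<rho>'" "of_rat L - u \<le> of_rat \<rho>'" "of_rat \<rho>' < 1 - of_rat \<tau> + v - w"
            using rat_pick[of "of_rat L - u" "1 - of_rat \<tau> + v - w"] False u01 key L tz c01 \<tau>1 rL
            by (auto simp: rat01_def)
          define \<rho> where "\<rho> = 1 - \<rho>'"
          have \<rho>: "rat01 \<rho>" using \<rho>'(1) by (simp add: \<rho>_def A.rat01_1m)
          have \<rho>v: "(of_rat \<rho> :: real) = 1 - of_rat \<rho>'" by (simp add: \<rho>_def of_rat_diff)
          define b where "b = A.imp (A.c \<rho>) a"
          have bS: "b \<in> A.S" using a \<rho> by (simp add: b_def)
          have "f b = B.imp (B.c \<rho>) (f a)" using fstr[OF a(1) \<rho>] by (simp add: b_def)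
          hence "qval B G (f b) = std_imp (of_rat \<rho>) u" using B.q_imp[OF mG] B.q_c[OF mG \<rho>] \<rho> fS[OF a(1)] by (simp add: u_def)
          hence "of_rat L \<le> qval B G (f b)" using \<rho>' \<rho>v rL by (auto simp: std_imp_def rat01_def)
          hence bX: "b \<in> X" using bS by (simp add: X_def)
          have "qval A F b = std_imp (of_rat \<rho>) w" using A.q_imp[OF mF _ a(1)] A.q_c[OF mF \<rho>] \<rho> by (simp add: b_def w_def)
          hence "qval A F b < qval A F y0" using qy0v \<rho>' \<rho>v by (simp add: std_imp_def)
          thus ?thesis using bX notin_iff[OF F y0S bS] by auto
        qed
      qed
    qed
    have XS: "(\<lambda>b. A.imp y0 b) ` X \<subseteq> A.S" using y0S by (auto simp: X_def)
    obtain bs where bs: "set bs \<subseteq> X" "\<forall>F. A.maxf F \<longrightarrow> (\<exists>b\<in>set bs. A.imp y0 b \<notin> F)"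
      using A.compact2[OF XS cov] by blast
    have bsS: "set bs \<subseteq> A.S" using bs(1) by (auto simp: X_def)
    define m where "m = meetl bs"
    have mS: "m \<in> A.S" using meetlS[OF bsS] by (simp add: m_def)
    have "\<forall>F\<in>specM A. qval A F m \<le> qval A F y0"
    proof
      fix F assume F: "F \<in> specM A"
      obtain b where b: "b \<in> set bs" "A.imp y0 b \<notin> F" using bs(2) F by (auto simp: A.specM_iff)
      have "qval A F b < qval A F y0" using notin_iff[OF F y0S] b bsS by auto
      moreover have "qval A F m \<le> qval A F b" using meetl_le[OF F bsS b(1)] by (simp add: m_def)
      ultimately show "qval A F m \<le> qval A F y0" by simp
    qed
    hence "A.le m y0" using leA mS y0S by simp
    hence "B.le (f m) (f y0)" using fmono mS y0S by simp
    hence "qval B G (f m) \<le> qval B G (f y0)" using B.q_le[OF mG] fS mS y0S by simp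
    also have "f y0 = B.imp (B.c \<tau>) (f x)" using fstr[OF x r\<tau>] by (simp add: y0_def)
    hence "qval B G (f y0) = std_imp (of_rat \<tau>) c" using B.q_imp[OF mG] B.q_c[OF mG r\<tau>] r\<tau> fS[OF x] by (simp add: c_def)
    finally have 1: "qval B G (f m) \<le> std_imp (of_rat \<tau>) c" .
    have "\<forall>b\<in>set bs. of_rat L \<le> qval B G (f b)" using bs(1) by (auto simp: X_def)
    moreover have "(of_rat L :: real) \<le> 1" using rL by (simp add: rat01_def)
    ultimately have "of_rat L \<le> qval B G (f m)"
      using f_meetl[OF G bsS, of "of_rat L"] by (simp add: m_def)
    thus False using 1 L tz by (simp add: std_imp_def)
  qed
qed


theorem partX:
  assumes y: "y \<in> B.S" and F: "F \<in> specM A"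
  shows "qval A F (g y) = sup01 ((\<lambda>G. std_mult (Rr F G) (qval B G y)) ` specM B)"
proof (rule order.antisym)
  define d where "d = qval A F (g y)"
  have d01: "0 \<le> d" "d \<le> 1" using qA01[OF F gS[OF y]] by (auto simp: d_def)
  have mF: "A.maxf F" using F by (simp add: A.specM_iff)
  have W01: "\<forall>G\<in>specM B. std_mult (Rr F G) (qval B G y) \<in> {0..1}"
  proof
    fix G assume G: "G \<in> specM B"
    show "std_mult (Rr F G) (qval B G y) \<in> {0..1}" using R01[OF F G] qB01[OF G y] by (intro std_mult01) auto
  qed
  show "sup01 ((\<lambda>G. std_mult (Rr F G) (qval B G y)) ` specM B) \<le> qval A F (g y)"
  proof (rule sup01_least)
    show "\<forall>G\<in>specM B. std_mult (Rr F G) (qval B G y) \<le> qval A F (g y)"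
    proof
      fix G assume G: "G \<in> specM B"
      have mG: "B.maxf G" using G by (simp add: B.specM_iff)
      have 1: "Rr F G \<le> std_imp (qval B G (f (g y))) d" using R_le[OF F G gS[OF y]] by (simp add: d_def)
      have 2: "qval B G y \<le> qval B G (f (g y))" using B.q_le[OF mG y _ unit[OF y]] fS gS y by simp
      have "0 \<le> qval B G y" "qval B G (f (g y)) \<le> 1" using qB01[OF G] y fS gS by auto
      thus "std_mult (Rr F G) (qval B G y) \<le> qval A F (g y)"
        using 1 2 d01 by (auto simp: d_def std_mult_def std_imp_def min_def split: if_splits)
    qed
    show "0 \<le> qval A F (g y)" using d01 by (simp add: d_def)
  qed
  show "qval A F (g y) \<le> sup01 ((\<lambda>G. std_mult (Rr F G) (qval B G y)) ` specM B)"
  proof (rule ccontr)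
    define W where "W = sup01 ((\<lambda>G. std_mult (Rr F G) (qval B G y)) ` specM B)"
    assume "\<not> qval A F (g y) \<le> sup01 ((\<lambda>G. std_mult (Rr F G) (qval B G y)) ` specM B)"
    hence Wd: "W < d" by (simp add: W_def d_def)
    have W0: "0 \<le> W" using sup01_01[OF W01] by (simp add: W_def)
    define \<delta> where "\<delta> = d - W"
    have \<delta>: "0 < \<delta>" using Wd by (simp add: \<delta>_def)
    have "W < W + \<delta>/4" using \<delta> by simp
    then obtain t' where t': "W < of_rat t'" "(of_rat t' :: real) < W + \<delta>/4" using of_rat_dense by blast
    have "W + \<delta>/4 < W + \<delta>/2" using \<delta> by simp
    then obtain \<tau> where \<tau>: "W + \<delta>/4 < of_rat \<tau>" "(of_rat \<tau> :: real) < W + \<delta>/2" using of_rat_dense by blast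
    have "(0::real) < \<delta>/4" using \<delta> by simp
    then obtain \<epsilon> where \<epsilon>: "0 < (of_rat \<epsilon> :: real)" "(of_rat \<epsilon> :: real) < \<delta>/4" using of_rat_dense by blast
    have \<tau>r: "0 < (of_rat \<tau> :: real)" "(of_rat \<tau> :: real) < 1" using \<tau> W0 d01 \<delta> \<delta>_def by linarith+
    have \<epsilon>r: "(of_rat \<epsilon> :: real) < 1" using \<epsilon> d01 W0 \<delta>_def by linarith
    have "0 < \<tau>" "\<tau> < 1" "0 < \<epsilon>" "\<epsilon> < 1" using \<tau>r \<epsilon>r \<epsilon> by simp_all
    hence r\<tau>: "rat01 \<tau>" and r\<epsilon>: "rat01 (1 - \<epsilon>)" by (auto simp: rat01_def)
    have e1: "(of_rat (1 - \<epsilon>) :: real) = 1 - of_rat \<epsilon>" by (simp add: of_rat_diff)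
    define y' where "y' = B.mul y (B.c (1 - \<epsilon>))"
    have y'S: "y' \<in> B.S" using y r\<epsilon> by (simp add: y'_def)
    have qy': "\<And>G. G \<in> specM B \<Longrightarrow> qval B G y' = max 0 (qval B G y - of_rat \<epsilon>)"
      using B.q_mul B.q_c y r\<epsilon> e1 by (simp add: y'_def B.specM_iff std_mult_def)
    define X where "X = {b \<in> A.S. qval A F b \<le> of_rat \<tau>}"
    have cov: "\<forall>G. B.maxf G \<longrightarrow> (\<exists>b\<in>X. B.imp (f b) y' \<notin> G)"
    proof (intro allI impI)
      fix G assume mG: "B.maxf G"
      hence G: "G \<in> specM B" by (simp add: B.specM_iff)
      define w0 where "w0 = qval B G y"
      have w01: "0 \<le> w0" "w0 \<le> 1" using qB01[OF G y] by (auto simp: w0_def)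
      have good: "\<And>b. b \<in> X \<Longrightarrow> max 0 (w0 - of_rat \<epsilon>) < qval B G (f b) \<Longrightarrow> \<exists>b\<in>X. B.imp (f b) y' \<notin> G"
      proof -
        fix b assume b: "b \<in> X" and lt: "max 0 (w0 - of_rat \<epsilon>) < qval B G (f b)"
        have bS: "b \<in> A.S" using b by (simp add: X_def)
        have "B.imp (f b) y' \<notin> G" using notin_iffB[OF G fS[OF bS] y'S] qy'[OF G] lt by (simp add: w0_def)
        thus "\<exists>b\<in>X. B.imp (f b) y' \<notin> G" using b by blast
      qed
      show "\<exists>b\<in>X. B.imp (f b) y' \<notin> G"
      proof (cases "w0 < of_rat \<tau> + of_rat \<epsilon>")
        case True
        have bX: "A.c \<tau> \<in> X" using A.q_c[OF mF r\<tau>] r\<tau> by (simp add: X_def)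
        have "of_rat \<tau> \<le> qval B G (f (A.c \<tau>))" using f_c[OF G r\<tau>] .
        hence "0 < qval B G (f (A.c \<tau>))" "w0 - of_rat \<epsilon> < qval B G (f (A.c \<tau>))" using True \<tau>r by linarith+
        hence "max 0 (w0 - of_rat \<epsilon>) < qval B G (f (A.c \<tau>))" by simp
        thus ?thesis using good bX by blast
      next
        case False
        have "std_mult (Rr F G) w0 \<le> W" unfolding W_def w0_def
          by (rule sup01_upper[OF G]) (use W01 in auto)
        hence "std_mult (Rr F G) w0 < of_rat t'" using t' by simp
        hence "Rr F G < 1 - w0 + of_rat t'" by (simp add: std_mult_def)
        then obtain a where a: "a \<in> A.S" "std_imp (qval B G (f a)) (qval A F a) < 1 - w0 + of_rat t'"
          using R_lt[OF F G] by blast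
        define u where "u = qval B G (f a)"
        define w where "w = qval A F a"
        have u01: "0 \<le> u" "u \<le> 1" using qB01[OF G fS[OF a(1)]] by (auto simp: u_def)
        have w01': "0 \<le> w" "w \<le> 1" using qA01[OF F a(1)] by (auto simp: w_def)
        have lt1: "1 - w0 + of_rat t' < 1" using False t' \<tau> \<epsilon> by linarith
        have key: "w0 - of_rat t' < u - w" using a(2) lt1 by (simp add: u_def w_def std_imp_def min_def split: if_splits)
        show ?thesis
        proof (cases "w \<le> of_rat \<tau>")
          case True
          obtain \<rho> where \<rho>: "rat01 \<rho>" "1 - of_rat \<tau> + w \<le> of_rat \<rho>" "of_rat \<rho> < 1 - of_rat \<tau> + w + of_rat \<epsilon>"
            using rat_pick[of "1 - of_rat \<tau> + w" "1 - of_rat \<tau> + w + of_rat \<epsilon>"] True w01' \<tau>r \<epsilon> by auto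
          define b where "b = A.imp (A.c \<rho>) a"
          have bS: "b \<in> A.S" using a \<rho> by (simp add: b_def)
          have "qval A F b = std_imp (of_rat \<rho>) w" using A.q_imp[OF mF _ a(1)] A.q_c[OF mF \<rho>(1)] \<rho>(1) by (simp add: b_def w_def)
          hence "qval A F b \<le> of_rat \<tau>" using \<rho> by (simp add: std_imp_def)
          hence bX: "b \<in> X" using bS by (simp add: X_def)
          have "f b = B.imp (B.c \<rho>) (f a)" using fstr[OF a(1) \<rho>(1)] by (simp add: b_def)
          hence "qval B G (f b) = std_imp (of_rat \<rho>) u" using B.q_imp[OF mG] B.q_c[OF mG \<rho>(1)] \<rho>(1) fS[OF a(1)] by (simp add: u_def)
          moreover have "max 0 (w0 - of_rat \<epsilon>) < std_imp (of_rat \<rho>) u"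
          proof -
            have "0 < 1 - of_rat \<rho> + u" "w0 - of_rat \<epsilon> < 1 - of_rat \<rho> + u" "w0 - of_rat \<epsilon> < 1"
              using \<rho>(2,3) key \<open>\<not> w0 < of_rat \<tau> + of_rat \<epsilon>\<close> t' \<tau> \<epsilon> w01 u01 w01' \<epsilon>r W0 \<delta> by linarith+
            thus ?thesis by (simp add: std_imp_def)
          qed
          ultimately show ?thesis using good bX by simp
        next
          case False
          obtain \<rho>' where \<rho>': "rat01 \<rho>'" "w - of_rat \<tau> \<le> of_rat \<rho>'" "of_rat \<rho>' < w - of_rat \<tau> + of_rat \<epsilon>"
            using rat_pick[of "w - of_rat \<tau>" "w - of_rat \<tau> + of_rat \<epsilon>"] False w01' \<tau>r \<epsilon> by auto
          define \<rho> where "\<rho> = 1 - \<rho>'"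
          have \<rho>: "rat01 \<rho>" using \<rho>'(1) by (simp add: \<rho>_def A.rat01_1m)
          have \<rho>v: "(of_rat \<rho> :: real) = 1 - of_rat \<rho>'" by (simp add: \<rho>_def of_rat_diff)
          define b where "b = A.mul a (A.c \<rho>)"
          have bS: "b \<in> A.S" using a \<rho> by (simp add: b_def)
          have "qval A F b = std_mult w (of_rat \<rho>)" using A.q_mul[OF mF a(1)] A.q_c[OF mF \<rho>] \<rho> by (simp add: b_def w_def)
          hence "qval A F b \<le> of_rat \<tau>" using \<rho>' \<rho>v \<tau>r by (simp add: std_mult_def)
          hence bX: "b \<in> X" using bS by (simp add: X_def)
          have "std_mult u (of_rat \<rho>) \<le> qval B G (f b)" using f_mul[OF G a(1) \<rho>] by (simp add: u_def b_def)
          moreover have "max 0 (w0 - of_rat \<epsilon>) < std_mult u (of_rat \<rho>)"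
          proof -
            have "0 < u - of_rat \<rho>'" "w0 - of_rat \<epsilon> < u - of_rat \<rho>'"
              using \<rho>'(2,3) key \<open>\<not> w0 < of_rat \<tau> + of_rat \<epsilon>\<close> t' \<tau> \<epsilon> w01 u01 w01' W0 \<delta> by linarith+
            thus ?thesis using \<rho>v by (simp add: std_mult_def)
          qed
          ultimately have "max 0 (w0 - of_rat \<epsilon>) < qval B G (f b)" by simp
          thus ?thesis using good bX by simp
        qed
      qed
    qed
    have XS: "(\<lambda>b. B.imp (f b) y') ` X \<subseteq> B.S" using y'S fS by (auto simp: X_def)
    obtain bs where bs: "set bs \<subseteq> X" "\<forall>G. B.maxf G \<longrightarrow> (\<exists>b\<in>set bs. B.imp (f b) y' \<notin> G)"
      using B.compact2[OF XS cov] by blast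
    have bsS: "set bs \<subseteq> A.S" using bs(1) by (auto simp: X_def)
    define m where "m = joinl bs"
    have mS: "m \<in> A.S" using joinlS[OF bsS] by (simp add: m_def)
    have "\<forall>b\<in>set bs. qval A F b \<le> of_rat \<tau>" using bs(1) by (auto simp: X_def)
    hence qm: "qval A F m \<le> of_rat \<tau>" using joinl_le[OF F bsS, of "of_rat \<tau>"] \<tau>r by (simp add: m_def)
    have "\<forall>G\<in>specM B. qval B G y' \<le> qval B G (f m)"
    proof
      fix G assume G: "G \<in> specM B"
      have mG: "B.maxf G" using G by (simp add: B.specM_iff)
      obtain b where b: "b \<in> set bs" "B.imp (f b) y' \<notin> G" using bs(2) mG by blast
      have bS: "b \<in> A.S" using b bsS by auto
      have "qval B G y' < qval B G (f b)" using notin_iffB[OF G fS[OF bS] y'S] b by simp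
      moreover have "A.le b m" using leA[OF bS mS] joinl_ge[OF _ bsS b(1)] by (simp add: m_def)
      hence "qval B G (f b) \<le> qval B G (f m)" using B.q_le[OF mG] fmono fS bS mS by simp
      ultimately show "qval B G y' \<le> qval B G (f m)" by simp
    qed
    hence "B.le y' (f m)" using leB y'S fS mS by simp
    hence "B.le y (B.imp (B.c (1 - \<epsilon>)) (f m))" using B.resid y r\<epsilon> fS mS by (simp add: y'_def)
    hence "B.le y (f (A.imp (A.c (1 - \<epsilon>)) m))" using fstr[OF mS r\<epsilon>] by simp
    hence "A.le (g y) (A.imp (A.c (1 - \<epsilon>)) m)" using gal y mS r\<epsilon> by simp
    hence "d \<le> qval A F (A.imp (A.c (1 - \<epsilon>)) m)" using A.q_le[OF mF] gS y mS r\<epsilon> by (simp add: d_def)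
    also have "\<dots> = std_imp (1 - of_rat \<epsilon>) (qval A F m)" using A.q_imp[OF mF] A.q_c[OF mF r\<epsilon>] r\<epsilon> mS e1 by simp
    finally have "d \<le> std_imp (1 - of_rat \<epsilon>) (qval A F m)" .
    hence "d \<le> of_rat \<epsilon> + of_rat \<tau>" using qm by (simp add: std_imp_def)
    thus False using \<tau> \<epsilon> \<delta>_def by linarith
  qed
qed

end

theorem theorem6:
  shows "(\<forall>(I::'i set) (J::'j set) (R::'i \<Rightarrow> 'j \<Rightarrow> real).
            (\<forall>i\<in>I. \<forall>j\<in>J. R i j \<in> {0..1}) \<longrightarrow>
            strong_ladj (power_pav I) (power_pav J) (fR I J R) (gR I J R))
       \<and> (\<forall>(A::'a pav) (B::'b pav) f g.
            pavelka A \<and> pavelka B \<and>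
            semisimple TYPE('ia) TYPE('ca) A \<and> semisimple TYPE('ib) TYPE('cb) B \<and>
            strong_ladj A B f g \<longrightarrow>
            (\<exists>R::'a set \<Rightarrow> 'b set \<Rightarrow> real.
               (\<forall>F\<in>specM A. \<forall>G\<in>specM B.
                  R F G = inf01 ((\<lambda>a. std_imp (qval B G (f a)) (qval A F a)) ` pcar A)) \<and>
               (\<forall>F\<in>specM A. \<forall>G\<in>specM B. R F G \<in> {0..1}) \<and>
               (\<forall>x\<in>pcar A. nat_emb B (f x) = fR (specM A) (specM B) R (nat_emb A x)) \<and>
               (\<forall>y\<in>pcar B. nat_emb A (g y) = gR (specM A) (specM B) R (nat_emb B y))))"
proof (intro conjI allI impI)
  fix I :: "'i set" and J :: "'j set" and R :: "'i \<Rightarrow> 'j \<Rightarrow> real"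
  assume "\<forall>i\<in>I. \<forall>j\<in>J. R i j \<in> {0..1}"
  thus "strong_ladj (power_pav I) (power_pav J) (fR I J R) (gR I J R)" by (rule part1)
next
  fix A :: "'a pav" and B :: "'b pav" and f g
  assume h: "pavelka A \<and> pavelka B \<and> semisimple TYPE('ia) TYPE('ca) A \<and> semisimple TYPE('ib) TYPE('cb) B \<and>
            strong_ladj A B f g"
  interpret pA: pav A using h by (simp add: pav_def)
  interpret pB: pav B using h by (simp add: pav_def)
  have sA: "semisimple TYPE('ia) TYPE('ca) A" and sB: "semisimple TYPE('ib) TYPE('cb) B" using h by auto
  have ssA: "p_le A x y" if "x \<in> pcar A" "y \<in> pcar A" "\<forall>F\<in>specM A. qval A F x \<le> qval A F y" for x y
    using pA.ss_sep[OF sA that] by (simp add: p_le_def)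
  have ssB: "p_le B x y" if "x \<in> pcar B" "y \<in> pcar B" "\<forall>F\<in>specM B. qval B F x \<le> qval B F y" for x y
    using pB.ss_sep[OF sB that] by (simp add: p_le_def)
  interpret ad: adjs A B f g
    by (unfold_locales) (use h ssA ssB in auto)
  show "\<exists>R::'a set \<Rightarrow> 'b set \<Rightarrow> real.
               (\<forall>F\<in>specM A. \<forall>G\<in>specM B.
                  R F G = inf01 ((\<lambda>a. std_imp (qval B G (f a)) (qval A F a)) ` pcar A)) \<and>
               (\<forall>F\<in>specM A. \<forall>G\<in>specM B. R F G \<in> {0..1}) \<and>
               (\<forall>x\<in>pcar A. nat_emb B (f x) = fR (specM A) (specM B) R (nat_emb A x)) \<and>
               (\<forall>y\<in>pcar B. nat_emb A (g y) = gR (specM A) (specM B) R (nat_emb B y))"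
  proof (intro exI conjI ballI)
    fix F G assume "F \<in> specM A" "G \<in> specM B"
    show "ad.Rr F G = inf01 ((\<lambda>a. std_imp (qval B G (f a)) (qval A F a)) ` pcar A)" by (simp add: ad.Rr_def)
  next
    fix F G assume "F \<in> specM A" "G \<in> specM B"
    thus "ad.Rr F G \<in> {0..1}" using ad.R01 by simp
  next
    fix x assume x: "x \<in> pcar A"
    show "nat_emb B (f x) = fR (specM A) (specM B) ad.Rr (nat_emb A x)"
      unfolding nat_emb_def fR_def
    proof (rule restrict_eqI)
      fix G assume G: "G \<in> specM B"
      have "inf01 ((\<lambda>F. std_imp (ad.Rr F G) (restrict (\<lambda>F. qval A F x) (specM A) F)) ` specM A)
          = inf01 ((\<lambda>F. std_imp (ad.Rr F G) (qval A F x)) ` specM A)"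
        by (intro arg_cong[where f=inf01] image_cong) auto
      thus "qval B G (f x) = inf01 ((\<lambda>F. std_imp (ad.Rr F G) (restrict (\<lambda>F. qval A F x) (specM A) F)) ` specM A)"
        using ad.partY[OF x G] by simp
    qed
  next
    fix y assume y: "y \<in> pcar B"
    show "nat_emb A (g y) = gR (specM A) (specM B) ad.Rr (nat_emb B y)"
      unfolding nat_emb_def gR_def
    proof (rule restrict_eqI)
      fix F assume F: "F \<in> specM A"
      have "sup01 ((\<lambda>G. std_mult (ad.Rr F G) (restrict (\<lambda>G. qval B G y) (specM B) G)) ` specM B)
          = sup01 ((\<lambda>G. std_mult (ad.Rr F G) (qval B G y)) ` specM B)"
        by (intro arg_cong[where f=sup01] image_cong) auto
      thus "qval A F (g y) = sup01 ((\<lambda>G. std_mult (ad.Rr F G) (restrict (\<lambda>G. qval B G y) (specM B) G)) ` specM B)"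
        using ad.partX[OF y F] by simp
    qed
  qed
qed

end
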